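(* Let $G$ be the subgroup of $VB_n$ generated by the elements $\lambda_{s,t}\lambda_{t,s}^{-1}$ ($1\le s<t\le n$); $\lambda_{t,s}^2$ ($1\le s<t\le n$); $\lambda_{t,s}\lambda_{r,q}\lambda_{t,s}^{-1}\lambda_{r,q}^{-1}$ ($1\le s<t\le n$, $1\le q<r\le n$, $(t-r)(t-q)(s-r)(s-q)>0$); $\lambda_{t,s}\lambda_{s,r}\lambda_{t,s}^{-1}\lambda_{t,r}^{-1}$ ($n\ge t>s>r\ge1$); $\lambda_{t,s}\lambda_{s,r}\lambda_{t,r}^{-1}\lambda_{s,r}^{-1}$ ($n\ge t>s>r\ge1$). Then the normal closure of $G$ in $VP_n$ coincides with $VP_n\cap H_n$.
   Context: The virtual braid group $VB_n$ has generators $\sigma_1,\dots,\sigma_{n-1},\rho_1,\dots,\rho_{n-1}$ and relations $\sigma_i\sigma_j=\sigma_j\sigma_i$, $\rho_i\rho_j=\rho_j\rho_i$, $\sigma_i\rho_j=\rho_j\sigma_i$ for $|i-j|\ge2$; $\sigma_i\sigma_{i+1}\sigma_i=\sigma_{i+1}\sigma_i\sigma_{i+1}$; $\rho_i\rho_{i+1}\rho_i=\rho_{i+1}\rho_i\rho_{i+1}$; $\rho_i^2=1$; $\rho_i\rho_{i+1}\sigma_i=\sigma_{i+1}\rho_i\rho_{i+1}$. Let $\iota_1:VB_n\to S_n$ send $\sigma_i,\rho_i\mapsto(i,i+1)$ and $\iota_2:VB_n\to S_n$ send $\sigma_i\mapsto1$, $\rho_i\mapsto(i,i+1)$; $VP_n=\ker\iota_1$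 (virtual pure braid group) and $H_n=\ker\iota_2$ (Rabenda group). Define $\lambda_{i,i+1}=\rho_i\sigma_i^{-1}$, $\lambda_{i+1,i}=\sigma_i^{-1}\rho_i$, and for $1\le i<j-1\le n-1$: $\lambda_{i,j}=\rho_{j-1}\rho_{j-2}\cdots\rho_{i+1}\lambda_{i,i+1}\rho_{i+1}\cdots\rho_{j-2}\rho_{j-1}$ and $\lambda_{j,i}=\rho_{j-1}\rho_{j-2}\cdots\rho_{i+1}\lambda_{i+1,i}\rho_{i+1}\cdots\rho_{j-2}\rho_{j-1}$. These elements lie in $VP_n$. *)

theory Defs
  imports "HOL-Algebra.Group" "HOL-Algebra.Generated_Groups"
begin

datatype vgen = Sg nat | Rh nat

type_synonym vletter = "vgen \<times> bool"   (* True = generator, False = its inverse *)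
type_synonym vword = "vletter list"

fun gidx :: "vgen \<Rightarrow> nat" where
  "gidx (Sg i) = i" | "gidx (Rh i) = i"

definition vb_letters :: "nat \<Rightarrow> vletter set" where
  "vb_letters n = {x. 1 \<le> gidx (fst x) \<and> gidx (fst x) \<le> n - 1}"

definition vb_words :: "nat \<Rightarrow> vword set" where
  "vb_words n = {w. set w \<subseteq> vb_letters n}"

definition flip :: "vletter \<Rightarrow> vletter" where
  "flip x = (fst x, \<not> snd x)"

definition winv :: "vword \<Rightarrow> vword" where
  "winv w = rev (map flip w)"

abbreviation sg :: "nat \<Rightarrow> vletter" where "sg i \<equiv> (Sg i, True)"
abbreviation sgi :: "nat \<Rightarrow> vletter" where "sgi i \<equiv> (Sg i, False)"
abbreviation rh :: "nat \<Rightarrow> vletter" where "rh i \<equiv> (Rh i, True)"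

definition vb_relators :: "nat \<Rightarrow> (vword \<times> vword) set" where
  "vb_relators n =
     {([sg i, sg j], [sg j, sg i]) | i j. 1 \<le> i \<and> i \<le> n - 1 \<and> 1 \<le> j \<and> j \<le> n - 1 \<and> (i + 2 \<le> j \<or> j + 2 \<le> i)}
   \<union> {([rh i, rh j], [rh j, rh i]) | i j. 1 \<le> i \<and> i \<le> n - 1 \<and> 1 \<le> j \<and> j \<le> n - 1 \<and> (i + 2 \<le> j \<or> j + 2 \<le> i)}
   \<union> {([sg i, rh j], [rh j, sg i]) | i j. 1 \<le> i \<and> i \<le> n - 1 \<and> 1 \<le> j \<and> j \<le> n - 1 \<and> (i + 2 \<le> j \<or> j + 2 \<le> i)}
   \<union> {([sg i, sg (i+1), sg i], [sg (i+1), sg i, sg (i+1)]) | i. 1 \<le> i \<and> i + 1 \<le> n - 1}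
   \<union> {([rh i, rh (i+1), rh i], [rh (i+1), rh i, rh (i+1)]) | i. 1 \<le> i \<and> i + 1 \<le> n - 1}
   \<union> {([rh i, rh i], []) | i. 1 \<le> i \<and> i \<le> n - 1}
   \<union> {([rh i, rh (i+1), sg i], [sg (i+1), rh i, rh (i+1)]) | i. 1 \<le> i \<and> i + 1 \<le> n - 1}"

inductive_set vb_rel :: "nat \<Rightarrow> (vword \<times> vword) set" for n where
  refl: "w \<in> vb_words n \<Longrightarrow> (w, w) \<in> vb_rel n"
| sym: "(u, v) \<in> vb_rel n \<Longrightarrow> (v, u) \<in> vb_rel n"
| trans: "(u, v) \<in> vb_rel n \<Longrightarrow> (v, w) \<in> vb_rel n \<Longrightarrow> (u, w) \<in> vb_rel n"
| ctx: "(u, v) \<in> vb_rel n \<Longrightarrow> a \<in> vb_words n \<Longrightarrow> b \<in> vb_words n \<Longrightarrow> (a @ u @ b, a @ v @ b) \<in> vb_rel n"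
| cancel: "x \<in> vb_letters n \<Longrightarrow> ([x, flip x], []) \<in> vb_rel n"
| relator: "(u, v) \<in> vb_relators n \<Longrightarrow> (u, v) \<in> vb_rel n"

definition vbc :: "nat \<Rightarrow> vword \<Rightarrow> vword set" where
  "vbc n w = vb_rel n `` {w}"

definition VB :: "nat \<Rightarrow> vword set monoid" where
  "VB n = \<lparr> carrier = vb_words n // vb_rel n,
            mult = (\<lambda>A B. \<Union>a\<in>A. \<Union>b\<in>B. vbc n (a @ b)),
            one = vbc n [] \<rparr>"

definition tr :: "nat \<Rightarrow> nat \<Rightarrow> nat" where
  "tr i = (\<lambda>k. if k = i then i + 1 else if k = i + 1 then i else k)"

definition iota1 :: "vword \<Rightarrow> (nat \<Rightarrow> nat)" where
  "iota1 w = foldr (\<lambda>x f. tr (gidx (fst x)) \<circ> f) w id"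

fun iota2_letter :: "vletter \<Rightarrow> (nat \<Rightarrow> nat)" where
  "iota2_letter (Sg i, b) = id"
| "iota2_letter (Rh i, b) = tr i"

definition iota2 :: "vword \<Rightarrow> (nat \<Rightarrow> nat)" where
  "iota2 w = foldr (\<lambda>x f. iota2_letter x \<circ> f) w id"

definition VP :: "nat \<Rightarrow> vword set set" where
  "VP n = {c \<in> carrier (VB n). \<forall>w\<in>c. iota1 w = id}"

definition Hn :: "nat \<Rightarrow> vword set set" where
  "Hn n = {c \<in> carrier (VB n). \<forall>w\<in>c. iota2 w = id}"

definition rchain :: "nat \<Rightarrow> nat \<Rightarrow> vword" where
  "rchain i j = map rh (rev [Suc i..<j])"

definition lam :: "nat \<Rightarrow> nat \<Rightarrow> vword" where
  "lam a b = (if a < b then rchain a b @ [rh a, sgi a] @ rev (rchain a b)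
              else rchain b a @ [sgi b, rh b] @ rev (rchain b a))"

definition G_gens :: "nat \<Rightarrow> vword set" where
  "G_gens n =
     {lam s t @ winv (lam t s) | s t. 1 \<le> s \<and> s < t \<and> t \<le> n}
   \<union> {lam t s @ lam t s | s t. 1 \<le> s \<and> s < t \<and> t \<le> n}
   \<union> {lam t s @ lam r q @ winv (lam t s) @ winv (lam r q) | s t q r.
        1 \<le> s \<and> s < t \<and> t \<le> n \<and> 1 \<le> q \<and> q < r \<and> r \<le> n \<and>
        (int t - int r) * (int t - int q) * (int s - int r) * (int s - int q) > 0}
   \<union> {lam t s @ lam s r @ winv (lam t s) @ winv (lam t r) | t s r. n \<ge> t \<and> t > s \<and> s > r \<and> r \<ge> 1}
   \<union> {lam t s @ lam s r @ winv (lam t r) @ winv (lam s r) | t s r. n \<ge> t \<and> t > s \<and> s > r \<and> r \<ge> 1}"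

definition Gsub :: "nat \<Rightarrow> vword set set" where
  "Gsub n = generate (VB n) (vbc n ` G_gens n)"

definition normal_closure_in :: "nat \<Rightarrow> vword set set \<Rightarrow> vword set set \<Rightarrow> vword set set" where
  "normal_closure_in n K X =
     generate (VB n) {g \<otimes>\<^bsub>VB n\<^esub> x \<otimes>\<^bsub>VB n\<^esub> inv\<^bsub>VB n\<^esub> g | g x. g \<in> K \<and> x \<in> X}"

end

theory Submission
  imports Defs
begin

lemma flip_flip[simp]: "flip (flip x) = x" by (simp add: flip_def)
lemma fst_flip[simp]: "fst (flip x) = fst x" by (simp add: flip_def)
lemma flip_letters[simp]: "flip x \<in> vb_letters n \<longleftrightarrow> x \<in> vb_letters n"
  by (simp add: vb_letters_def)
lemma words_append[simp]: "u @ v \<in> vb_words n \<longleftrightarrow> u \<in> vb_words n \<and> v \<in> vb_words n"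
  by (auto simp: vb_words_def)
lemma words_Cons[simp]: "x # v \<in> vb_words n \<longleftrightarrow> x \<in> vb_letters n \<and> v \<in> vb_words n"
  by (auto simp: vb_words_def)
lemma words_Nil[simp]: "[] \<in> vb_words n" by (simp add: vb_words_def)
lemma winv_Nil[simp]: "winv [] = []" by (simp add: winv_def)
lemma winv_Cons[simp]: "winv (x # w) = winv w @ [flip x]" by (simp add: winv_def)
lemma winv_append[simp]: "winv (u @ v) = winv v @ winv u" by (simp add: winv_def)
lemma winv_winv[simp]: "winv (winv w) = w" by (simp add: winv_def rev_map comp_def)
lemma winv_words[simp]: "winv w \<in> vb_words n \<longleftrightarrow> w \<in> vb_words n"
  by (auto simp: winv_def vb_words_def)

lemma relators_words: "(u, v) \<in> vb_relators n \<Longrightarrow> u \<in> vb_words n \<and> v \<in> vb_words n"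
  by (auto simp: vb_relators_def vb_letters_def)

lemma rel_words: "(u, v) \<in> vb_rel n \<Longrightarrow> u \<in> vb_words n \<and> v \<in> vb_words n"
  by (induction rule: vb_rel.induct) (auto dest: relators_words)

lemma equiv_rel: "equiv (vb_words n) (vb_rel n)"
  unfolding equiv_def refl_on_def sym_def trans_def
proof (intro conjI allI impI)
  show "vb_rel n \<subseteq> vb_words n \<times> vb_words n" using rel_words by auto
qed (auto intro: vb_rel.refl vb_rel.sym vb_rel.trans)

lemma rel_cong: "(u, u') \<in> vb_rel n \<Longrightarrow> (v, v') \<in> vb_rel n \<Longrightarrow> (u @ v, u' @ v') \<in> vb_rel n"
proof -
  assume a: "(u, u') \<in> vb_rel n" "(v, v') \<in> vb_rel n"
  have "([] @ u @ v, [] @ u' @ v) \<in> vb_rel n" using a by (intro vb_rel.ctx) (auto dest: rel_words)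
  moreover have "(u' @ v @ [], u' @ v' @ []) \<in> vb_rel n" using a by (intro vb_rel.ctx) (auto dest: rel_words)
  ultimately show ?thesis by (simp add: vb_rel.trans[of "u @ v" "u' @ v"])
qed

lemma vbc_eq_iff: "u \<in> vb_words n \<Longrightarrow> v \<in> vb_words n \<Longrightarrow> vbc n u = vbc n v \<longleftrightarrow> (u, v) \<in> vb_rel n"
  unfolding vbc_def using eq_equiv_class_iff[OF equiv_rel] by blast

lemma vbc_eqI: "(u, v) \<in> vb_rel n \<Longrightarrow> vbc n u = vbc n v"
  using vbc_eq_iff rel_words by blast

lemma in_vbc: "w \<in> vb_words n \<Longrightarrow> w \<in> vbc n w"
  unfolding vbc_def using equiv_class_self[OF equiv_rel] by blast

lemma in_vbc_iff: "v \<in> vbc n w \<longleftrightarrow> (w, v) \<in> vb_rel n"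
  unfolding vbc_def by auto

lemma carrier_VB: "carrier (VB n) = vbc n ` vb_words n"
  by (auto simp: VB_def quotient_def vbc_def)

lemma mult_VB: "u \<in> vb_words n \<Longrightarrow> v \<in> vb_words n \<Longrightarrow> vbc n u \<otimes>\<^bsub>VB n\<^esub> vbc n v = vbc n (u @ v)"
proof -
  assume u: "u \<in> vb_words n" and v: "v \<in> vb_words n"
  have eq: "vbc n (a @ b) = vbc n (u @ v)" if "a \<in> vbc n u" "b \<in> vbc n v" for a b
  proof -
    have "(u, a) \<in> vb_rel n" "(v, b) \<in> vb_rel n" using that by (auto simp: in_vbc_iff)
    then have "(u @ v, a @ b) \<in> vb_rel n" by (rule rel_cong)
    then show ?thesis by (rule vbc_eqI[OF vb_rel.sym])
  qed
  have "u \<in> vbc n u" "v \<in> vbc n v" using u v in_vbc by auto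
  then have "(\<Union>a\<in>vbc n u. \<Union>b\<in>vbc n v. vbc n (a @ b)) = vbc n (u @ v)"
  proof (intro equalityI subsetI)
    fix x assume "x \<in> (\<Union>a\<in>vbc n u. \<Union>b\<in>vbc n v. vbc n (a @ b))"
    then obtain a b where "a \<in> vbc n u" "b \<in> vbc n v" "x \<in> vbc n (a @ b)" by blast
    then show "x \<in> vbc n (u @ v)" using eq[of a b] by simp
  next
    fix x assume "x \<in> vbc n (u @ v)"
    then show "x \<in> (\<Union>a\<in>vbc n u. \<Union>b\<in>vbc n v. vbc n (a @ b))" using u v in_vbc by blast
  qed
  then show ?thesis unfolding VB_def by simp
qed

lemma one_VB: "\<one>\<^bsub>VB n\<^esub> = vbc n []" by (simp add: VB_def)

lemma cancel_inv: "w \<in> vb_words n \<Longrightarrow> (winv w @ w, []) \<in> vb_rel n"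
proof (induction w)
  case Nil then show ?case by (auto intro: vb_rel.refl)
next
  case (Cons x w)
  then have x: "x \<in> vb_letters n" and w: "w \<in> vb_words n" by auto
  have "([flip x, x], []) \<in> vb_rel n" using vb_rel.cancel[of "flip x" n] x by simp
  then have "(winv w @ [flip x, x] @ w, winv w @ [] @ w) \<in> vb_rel n"
    using w by (intro vb_rel.ctx) auto
  then have "(winv (x # w) @ x # w, winv w @ w) \<in> vb_rel n" by simp
  then show ?case using Cons(1)[OF w] by (rule vb_rel.trans)
qed

lemma vbc_carrier[simp]: "w \<in> vb_words n \<Longrightarrow> vbc n w \<in> carrier (VB n)"
  by (simp add: carrier_VB)

lemma carrierE: "x \<in> carrier (VB n) \<Longrightarrow> (\<And>w. w \<in> vb_words n \<Longrightarrow> x = vbc n w \<Longrightarrow> P) \<Longrightarrow> P"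
  by (auto simp: carrier_VB)

lemma group_VB: "group (VB n)"
proof (rule groupI)
  show "\<one>\<^bsub>VB n\<^esub> \<in> carrier (VB n)" by (simp add: one_VB)
next
  fix x y assume "x \<in> carrier (VB n)" "y \<in> carrier (VB n)"
  then show "x \<otimes>\<^bsub>VB n\<^esub> y \<in> carrier (VB n)"
    by (elim carrierE) (simp add: mult_VB)
next
  fix x y z assume "x \<in> carrier (VB n)" "y \<in> carrier (VB n)" "z \<in> carrier (VB n)"
  then show "x \<otimes>\<^bsub>VB n\<^esub> y \<otimes>\<^bsub>VB n\<^esub> z = x \<otimes>\<^bsub>VB n\<^esub> (y \<otimes>\<^bsub>VB n\<^esub> z)"
    by (elim carrierE) (simp add: mult_VB)
next
  fix x assume "x \<in> carrier (VB n)"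
  then show "\<one>\<^bsub>VB n\<^esub> \<otimes>\<^bsub>VB n\<^esub> x = x" by (elim carrierE) (simp add: mult_VB one_VB)
next
  fix x assume "x \<in> carrier (VB n)"
  then obtain w where w: "w \<in> vb_words n" "x = vbc n w" by (elim carrierE)
  then have "vbc n (winv w) \<in> carrier (VB n)" "vbc n (winv w) \<otimes>\<^bsub>VB n\<^esub> x = \<one>\<^bsub>VB n\<^esub>"
    using vbc_eqI[OF cancel_inv[OF w(1)]] by (simp_all add: mult_VB one_VB)
  then show "\<exists>y\<in>carrier (VB n). y \<otimes>\<^bsub>VB n\<^esub> x = \<one>\<^bsub>VB n\<^esub>" by blast
qed


lemma inv_VB: "w \<in> vb_words n \<Longrightarrow> inv\<^bsub>VB n\<^esub> (vbc n w) = vbc n (winv w)"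
  by (rule group.inv_equality[OF group_VB]) (simp_all add: mult_VB one_VB vbc_eqI[OF cancel_inv])

definition perm :: "nat list \<Rightarrow> nat \<Rightarrow> nat" where
  "perm l = foldr (\<lambda>i f. tr i \<circ> f) l id"

definition gprod :: "('a, 'b) monoid_scheme \<Rightarrow> (nat \<Rightarrow> 'a) \<Rightarrow> nat list \<Rightarrow> 'a" where
  "gprod G s l = foldr (\<lambda>i acc. s i \<otimes>\<^bsub>G\<^esub> acc) l \<one>\<^bsub>G\<^esub>"

definition cox :: "('a, 'b) monoid_scheme \<Rightarrow> (nat \<Rightarrow> 'a) \<Rightarrow> nat \<Rightarrow> bool" where
  "cox G s m \<longleftrightarrow> (\<forall>i. 1 \<le> i \<and> i \<le> m \<longrightarrow> s i \<in> carrier G \<and> s i \<otimes>\<^bsub>G\<^esub> s i = \<one>\<^bsub>G\<^esub>)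
     \<and> (\<forall>i j. 1 \<le> i \<and> j \<le> m \<and> i + 2 \<le> j \<longrightarrow> s i \<otimes>\<^bsub>G\<^esub> s j = s j \<otimes>\<^bsub>G\<^esub> s i)
     \<and> (\<forall>i. 1 \<le> i \<and> i + 1 \<le> m \<longrightarrow> s i \<otimes>\<^bsub>G\<^esub> s (i+1) \<otimes>\<^bsub>G\<^esub> s i = s (i+1) \<otimes>\<^bsub>G\<^esub> s i \<otimes>\<^bsub>G\<^esub> s (i+1))"

lemma perm_Nil[simp]: "perm [] = id" by (simp add: perm_def)
lemma perm_Cons[simp]: "perm (i # l) = tr i \<circ> perm l" by (simp add: perm_def)
lemma perm_append[simp]: "perm (a @ b) = perm a \<circ> perm b"
  by (induction a) auto

lemma gprod_Nil[simp]: "gprod G s [] = \<one>\<^bsub>G\<^esub>" by (simp add: gprod_def)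
lemma gprod_Cons[simp]: "gprod G s (i # l) = s i \<otimes>\<^bsub>G\<^esub> gprod G s l" by (simp add: gprod_def)

lemma tr_tr[simp]: "tr i (tr i x) = x" by (simp add: tr_def)
lemma tr_comp_tr: "tr i \<circ> tr i = id" by (auto simp: tr_def)
lemma tr_far: "i + 2 \<le> j \<Longrightarrow> tr i \<circ> tr j = tr j \<circ> tr i" by (auto simp: tr_def)
lemma tr_braid: "tr i \<circ> tr (i+1) \<circ> tr i = tr (i+1) \<circ> tr i \<circ> tr (i+1)" by (auto simp: tr_def)
lemma bij_tr: "bij (tr i)"
  by (metis bij_betw_def inj_on_inverseI surjI tr_tr)

definition Sperm :: "(nat \<Rightarrow> nat) monoid" where
  "Sperm = \<lparr>carrier = {f. bij f}, mult = (\<circ>), one = id\<rparr>"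

lemma group_Sperm: "group Sperm"
proof (rule groupI)
  fix x assume "x \<in> carrier Sperm"
  then have "bij x" by (simp add: Sperm_def)
  then have "bij (Hilbert_Choice.inv x)" "Hilbert_Choice.inv x \<circ> x = id" by (auto simp: bij_imp_bij_inv bij_is_inj)
  then show "\<exists>y\<in>carrier Sperm. y \<otimes>\<^bsub>Sperm\<^esub> x = \<one>\<^bsub>Sperm\<^esub>" by (auto simp: Sperm_def)
qed (auto simp: Sperm_def bij_comp comp_assoc)

lemma cox_Sperm: "cox Sperm tr m"
  unfolding cox_def Sperm_def using bij_tr by (auto simp: fun_eq_iff) (auto simp: tr_def)

lemma gprod_Sperm: "gprod Sperm tr l = perm l"
  by (induction l) (auto simp: Sperm_def)

lemma cox_DirProd: "cox G s m \<Longrightarrow> cox H t m \<Longrightarrow> cox (G \<times>\<times> H) (\<lambda>i. (s i, t i)) m"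
  unfolding cox_def by auto

lemma gprod_DirProd: "gprod (G \<times>\<times> H) (\<lambda>i. (s i, t i)) l = (gprod G s l, gprod H t l)"
  by (induction l) auto

lemma cox_mono: "cox G s m \<Longrightarrow> m' \<le> m \<Longrightarrow> cox G s m'"
  unfolding cox_def by (meson le_trans)

context group begin

lemma cox_carrier: "cox G s m \<Longrightarrow> 1 \<le> i \<Longrightarrow> i \<le> m \<Longrightarrow> s i \<in> carrier G"
  by (simp add: cox_def)

lemma gprod_carrier: "cox G s m \<Longrightarrow> set l \<subseteq> {1..m} \<Longrightarrow> gprod G s l \<in> carrier G"
  by (induction l) (auto simp: cox_carrier)

lemma gprod_append: "cox G s m \<Longrightarrow> set a \<subseteq> {1..m} \<Longrightarrow> set b \<subseteq> {1..m} \<Longrightarrow>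
   gprod G s (a @ b) = gprod G s a \<otimes> gprod G s b"
  by (induction a) (auto simp: cox_carrier gprod_carrier m_assoc)

lemma cox_comm: "cox G s m \<Longrightarrow> 1 \<le> i \<Longrightarrow> i \<le> m \<Longrightarrow> 1 \<le> j \<Longrightarrow> j \<le> m \<Longrightarrow> (i + 2 \<le> j \<or> j + 2 \<le> i) \<Longrightarrow>
   s i \<otimes> s j = s j \<otimes> s i"
  unfolding cox_def by (metis le_trans le_add1)

lemma gprod_comm:
  assumes c: "cox G s m" and l: "set l \<subseteq> {1..m}" and i: "1 \<le> i" "i \<le> m"
    and far: "\<forall>j\<in>set l. i + 2 \<le> j \<or> j + 2 \<le> i"
  shows "gprod G s l \<otimes> s i = s i \<otimes> gprod G s l"
  using l far
proof (induction l)
  case Nil then show ?case using cox_carrier[OF c i] by simp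
next
  case (Cons j l)
  then have j: "1 \<le> j" "j \<le> m" and lc: "gprod G s l \<in> carrier G" using gprod_carrier[OF c] by auto
  have sj: "s j \<in> carrier G" and si: "s i \<in> carrier G" using cox_carrier[OF c] i j by auto
  have "gprod G s (j # l) \<otimes> s i = s j \<otimes> (gprod G s l \<otimes> s i)" using sj si lc by (simp add: m_assoc)
  also have "\<dots> = s j \<otimes> s i \<otimes> gprod G s l" using Cons sj si lc by (simp add: m_assoc)
  also have "\<dots> = s i \<otimes> s j \<otimes> gprod G s l" using cox_comm[OF c j i] Cons by auto
  finally show ?case using sj si lc by (simp add: m_assoc)
qed


end

definition cyc :: "nat \<Rightarrow> nat \<Rightarrow> nat list" where
  "cyc m k = rev [k..<Suc m]"

lemma set_cyc[simp]: "set (cyc m k) = {k..m}" by (auto simp: cyc_def)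
lemma cyc_empty[simp]: "cyc m (Suc m) = []" by (simp add: cyc_def)
lemma cyc_Suc: "k \<le> m \<Longrightarrow> cyc m k = cyc m (Suc k) @ [k]"
  by (simp add: cyc_def upt_conv_Cons)
lemma cyc_split: "k < i \<Longrightarrow> i \<le> m \<Longrightarrow> cyc m k = cyc m (Suc i) @ [i, i - 1] @ rev [k..<i - 1]"
proof -
  assume a: "k < i" "i \<le> m"
  have "[k..<Suc m] = [k..<i - 1] @ [i - 1..<Suc m]"
    using a upt_add_eq_append[of k "i - 1" "Suc m - (i - 1)"] by simp
  also have "[i - 1..<Suc m] = (i - 1) # [i..<Suc m]" using a by (simp add: upt_conv_Cons)
  also have "[i..<Suc m] = i # [Suc i..<Suc m]" using a by (simp add: upt_conv_Cons)
  finally show ?thesis by (simp add: cyc_def)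
qed

lemma (in group) nf_step:
  assumes c: "cox G s m" and h: "set h \<subseteq> {1..m - 1}" and k: "1 \<le> k" "k \<le> Suc m" and i: "1 \<le> i" "i \<le> m"
  shows "\<exists>h' k'. set h' \<subseteq> {1..m - 1} \<and> 1 \<le> k' \<and> k' \<le> Suc m \<and>
           gprod G s (h @ cyc m k) \<otimes> s i = gprod G s (h' @ cyc m k')"
proof -
  have hm: "set h \<subseteq> {1..m}" by (rule subset_trans[OF h]) auto
  have cm: "set (cyc m k') \<subseteq> {1..m}" if "1 \<le> k'" for k' using that by auto
  have si: "s i \<in> carrier G" using cox_carrier[OF c i] .
  have hc: "gprod G s h \<in> carrier G" using gprod_carrier[OF c hm] .
  have cc: "gprod G s (cyc m k') \<in> carrier G" if "1 \<le> k'" for k' using gprod_carrier[OF c cm[OF that]] .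
  have split: "gprod G s (h' @ cyc m k') = gprod G s h' \<otimes> gprod G s (cyc m k')" if "set h' \<subseteq> {1..m}" "1 \<le> k'" for h' k'
    using gprod_append[OF c that(1) cm[OF that(2)]] .
  show ?thesis
  proof (cases "k = Suc m")
    case True
    show ?thesis
    proof (cases "i = m")
      case True
      have "gprod G s (h @ cyc m k) \<otimes> s i = gprod G s (h @ cyc m m)"
        using `k = Suc m` True split[OF hm, of m] split[OF hm, of k] si hc i k
        by (simp add: cyc_def)
      then show ?thesis using h i True by (intro exI[of _ h] exI[of _ m]) auto
    next
      case False
      have "gprod G s (h @ cyc m k) \<otimes> s i = gprod G s ((h @ [i]) @ cyc m k)"
        using `k = Suc m` split[OF hm, of k] gprod_append[OF c hm, of "[i]"] si hc i by simp
      then show ?thesis using h i False k by (intro exI[of _ "h @ [i]"] exI[of _ k]) auto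
    qed
  next
    case False
    then have km: "k \<le> m" using k by simp
    have hi: "set (h @ [i']) \<subseteq> {1..m}" if "1 \<le> i'" "i' \<le> m" for i' using hm that by auto
    consider "Suc i < k" | "Suc i = k" | "i = k" | "k < i" by linarith
    then show ?thesis
    proof cases
      case 1
      have com: "gprod G s (cyc m k) \<otimes> s i = s i \<otimes> gprod G s (cyc m k)"
        using gprod_comm[OF c cm[OF k(1)] i] 1 by auto
      have "gprod G s (h @ cyc m k) \<otimes> s i = gprod G s h \<otimes> (gprod G s (cyc m k) \<otimes> s i)"
        using split[OF hm k(1)] hc cc[OF k(1)] si by (simp add: m_assoc)
      also have "\<dots> = gprod G s (h @ [i]) \<otimes> gprod G s (cyc m k)"
        using com gprod_append[OF c hm, of "[i]"] hc cc[OF k(1)] si i by (simp add: m_assoc)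
      also have "\<dots> = gprod G s ((h @ [i]) @ cyc m k)" using split[OF hi[OF i] k(1)] by simp
      finally show ?thesis using h i 1 k by (intro exI[of _ "h @ [i]"] exI[of _ k]) auto
    next
      case 2
      have "gprod G s (h @ cyc m k) \<otimes> s i = gprod G s (h @ cyc m i)"
        using cyc_Suc[of i m] 2 km gprod_append[OF c, of "h @ cyc m k" "[i]"] hm k si i
        by (auto simp: m_assoc)
      then show ?thesis using h i by (intro exI[of _ h] exI[of _ i]) auto
    next
      case 3
      have e: "cyc m k = cyc m (Suc k) @ [k]" using cyc_Suc km by simp
      have "gprod G s (h @ cyc m k) \<otimes> s i = gprod G s (h @ cyc m (Suc k)) \<otimes> (s k \<otimes> s k)"
        using e gprod_append[OF c, of "h @ cyc m (Suc k)" "[k]"] hm k si 3 km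
        gprod_carrier[OF c, of "h @ cyc m (Suc k)"] by (auto simp: m_assoc)
      also have "\<dots> = gprod G s (h @ cyc m (Suc k))"
        using c 3 i gprod_carrier[OF c, of "h @ cyc m (Suc k)"] hm by (auto simp: cox_def)
      finally show ?thesis using h km by (intro exI[of _ h] exI[of _ "Suc k"]) auto
    next
      case 4
      define A where "A = gprod G s (cyc m (Suc i))"
      define B where "B = gprod G s (rev [k..<i - 1])"
      have Ac: "A \<in> carrier G" unfolding A_def by (rule cc) simp
      have Bc: "B \<in> carrier G" unfolding B_def using k i by (intro gprod_carrier[OF c]) auto
      have i1: "1 \<le> i - 1" "i - 1 \<le> m" using 4 k i by auto
      have si1: "s (i - 1) \<in> carrier G" using cox_carrier[OF c i1] .
      have ce: "gprod G s (cyc m k) = A \<otimes> (s i \<otimes> (s (i - 1) \<otimes> B))"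
        unfolding A_def B_def using cyc_split[OF 4 i(2)] gprod_append[OF c] k i i1
        by (simp add: gprod_append[OF c] subset_iff)
      have comB: "B \<otimes> s i = s i \<otimes> B" unfolding B_def
        using k i by (intro gprod_comm[OF c _ i]) auto
      have comA: "A \<otimes> s (i - 1) = s (i - 1) \<otimes> A" unfolding A_def
        using i by (intro gprod_comm[OF c _ i1]) auto
      have br0: "s (i - 1) \<otimes> s (Suc (i - 1)) \<otimes> s (i - 1) = s (Suc (i - 1)) \<otimes> s (i - 1) \<otimes> s (Suc (i - 1))"
        using c i1 i 4 unfolding cox_def by auto
      have br: "s i \<otimes> s (i - 1) \<otimes> s i = s (i - 1) \<otimes> s i \<otimes> s (i - 1)"
        using br0 4 by (simp add: Suc_pred')
      have "gprod G s (cyc m k) \<otimes> s i = A \<otimes> (s i \<otimes> (s (i - 1) \<otimes> (B \<otimes> s i)))"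
        using ce Ac Bc si si1 by (simp add: m_assoc)
      also have "\<dots> = A \<otimes> (s i \<otimes> (s (i - 1) \<otimes> (s i \<otimes> B)))" using comB by simp
      also have "\<dots> = A \<otimes> (s i \<otimes> s (i - 1) \<otimes> s i) \<otimes> B"
        using Ac Bc si si1 by (simp add: m_assoc)
      also have "\<dots> = A \<otimes> (s (i - 1) \<otimes> s i \<otimes> s (i - 1)) \<otimes> B" using br by simp
      also have "\<dots> = (A \<otimes> s (i - 1)) \<otimes> (s i \<otimes> (s (i - 1) \<otimes> B))"
        using Ac Bc si si1 by (simp add: m_assoc)
      also have "\<dots> = (s (i - 1) \<otimes> A) \<otimes> (s i \<otimes> (s (i - 1) \<otimes> B))" using comA by simp
      also have "\<dots> = s (i - 1) \<otimes> gprod G s (cyc m k)"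
        using ce Ac Bc si si1 by (simp add: m_assoc)
      finally have key: "gprod G s (cyc m k) \<otimes> s i = s (i - 1) \<otimes> gprod G s (cyc m k)" .
      have "gprod G s (h @ cyc m k) \<otimes> s i = gprod G s h \<otimes> (gprod G s (cyc m k) \<otimes> s i)"
        using split[OF hm k(1)] hc cc[OF k(1)] si by (simp add: m_assoc)
      also have "\<dots> = gprod G s (h @ [i - 1]) \<otimes> gprod G s (cyc m k)"
        using key gprod_append[OF c hm, of "[i - 1]"] hc cc[OF k(1)] si1 i1 by (simp add: m_assoc)
      also have "\<dots> = gprod G s ((h @ [i - 1]) @ cyc m k)" using split[OF hi[OF i1] k(1)] by simp
      finally show ?thesis using h i 4 k by (intro exI[of _ "h @ [i - 1]"] exI[of _ k]) auto
    qed
  qed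
qed


lemma (in group) nf:
  assumes c: "cox G s m"
  shows "set l \<subseteq> {1..m} \<Longrightarrow> \<exists>h k. set h \<subseteq> {1..m - 1} \<and> 1 \<le> k \<and> k \<le> Suc m \<and> gprod G s l = gprod G s (h @ cyc m k)"
proof (induction l rule: rev_induct)
  case Nil then show ?case by (intro exI[of _ "[]"] exI[of _ "Suc m"]) auto
next
  case (snoc i l)
  then obtain h k where hk: "set h \<subseteq> {1..m - 1}" "1 \<le> k" "k \<le> Suc m" "gprod G s l = gprod G s (h @ cyc m k)" by auto
  have i: "1 \<le> i" "i \<le> m" using snoc by auto
  have "gprod G s (l @ [i]) = gprod G s l \<otimes> s i"
    using gprod_append[OF c, of l "[i]"] snoc.prems cox_carrier[OF c i] by simp
  then show ?case using nf_step[OF c hk(1-3) i] hk(4) by metis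
qed

lemma perm_cyc: "k \<le> m \<Longrightarrow> perm (cyc m k) k = Suc m"
proof (induction m)
  case 0 then show ?case by (simp add: cyc_def tr_def)
next
  case (Suc m)
  have e: "cyc (Suc m) k = Suc m # cyc m k" using Suc.prems by (simp add: cyc_def)
  show ?case
  proof (cases "k = Suc m")
    case True then show ?thesis by (simp add: cyc_def tr_def)
  next
    case False then show ?thesis using Suc e by (simp add: tr_def)
  qed
qed

lemma perm_fix: "(\<forall>j\<in>set h. Suc j < x \<or> x < j) \<Longrightarrow> perm h x = x"
  by (induction h) (auto simp: tr_def)

theorem coxeter:
  assumes G: "group G"
  shows "cox G s m \<Longrightarrow> set l \<subseteq> {1..m} \<Longrightarrow> perm l = id \<Longrightarrow> gprod G s l = \<one>\<^bsub>G\<^esub>"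
proof (induction m arbitrary: l)
  case 0 then have "l = []" by auto
  then show ?case by simp
next
  case (Suc m)
  define D where "D = G \<times>\<times> Sperm"
  have D: "group D" unfolding D_def by (rule DirProd_group[OF G group_Sperm])
  have cD: "cox D (\<lambda>i. (s i, tr i)) (Suc m)" unfolding D_def by (rule cox_DirProd[OF Suc.prems(1) cox_Sperm])
  obtain h k where hk: "set h \<subseteq> {1..Suc m - 1}" "1 \<le> k" "k \<le> Suc (Suc m)"
    "gprod D (\<lambda>i. (s i, tr i)) l = gprod D (\<lambda>i. (s i, tr i)) (h @ cyc (Suc m) k)"
    using group.nf[OF D cD Suc.prems(2)] by blast
  then have e1: "gprod G s l = gprod G s (h @ cyc (Suc m) k)" and e2: "perm l = perm (h @ cyc (Suc m) k)"
    unfolding D_def gprod_DirProd gprod_Sperm by auto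
  have k: "k = Suc (Suc m)"
  proof (rule ccontr)
    assume "k \<noteq> Suc (Suc m)"
    then have "k \<le> Suc m" using hk by simp
    then have "perm (cyc (Suc m) k) k = Suc (Suc m)" by (rule perm_cyc)
    moreover have "perm h (Suc (Suc m)) = Suc (Suc m)" using hk(1) by (intro perm_fix) auto
    ultimately have "perm l k = Suc (Suc m)" using e2 by simp
    then show False using Suc.prems(3) `k \<le> Suc m` by simp
  qed
  then have "gprod G s l = gprod G s h" "perm h = id" using e1 e2 Suc.prems(3) by (simp_all add: id_def)
  moreover have "gprod G s h = \<one>\<^bsub>G\<^esub>"
    using hk(1) `perm h = id` by (intro Suc.IH cox_mono[OF Suc.prems(1)]) auto
  ultimately show ?case by simp
qed

locale vbG = group G for G (structure) + fixes n :: nat assumes GVB: "G = VB n"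
begin

definition r where "r i = vbc n [rh i]"
definition s where "s i = vbc n [sg i]"
definition t where "t i = vbc n [sgi i]"

lemma vbc_mult: "u \<in> vb_words n \<Longrightarrow> v \<in> vb_words n \<Longrightarrow> vbc n (u @ v) = vbc n u \<otimes> vbc n v"
  using mult_VB GVB by simp
lemma vbc_one: "\<one> = vbc n []" using one_VB GVB by simp
lemma vbc_in[simp]: "w \<in> vb_words n \<Longrightarrow> vbc n w \<in> carrier G" using GVB by simp
lemma vbc_inv: "w \<in> vb_words n \<Longrightarrow> inv (vbc n w) = vbc n (winv w)" using inv_VB GVB by simp
lemma vbc_Cons: "x \<in> vb_letters n \<Longrightarrow> w \<in> vb_words n \<Longrightarrow> vbc n (x # w) = vbc n [x] \<otimes> vbc n w"
  using vbc_mult[of "[x]" w] by simp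
lemma carrier_G: "carrier G = vbc n ` vb_words n" using GVB carrier_VB by simp

lemma rel_eq: "(u, v) \<in> vb_relators n \<Longrightarrow> vbc n u = vbc n v"
  by (rule vbc_eqI) (rule vb_rel.relator)

lemma letter_ok[simp]: "(a, e) \<in> vb_letters n \<longleftrightarrow> 1 \<le> gidx a \<and> gidx a < n"
  by (auto simp: vb_letters_def)

lemma r_c[simp]: "1 \<le> i \<Longrightarrow> i < n \<Longrightarrow> r i \<in> carrier G" by (simp add: r_def)
lemma s_c[simp]: "1 \<le> i \<Longrightarrow> i < n \<Longrightarrow> s i \<in> carrier G" by (simp add: s_def)
lemma t_c[simp]: "1 \<le> i \<Longrightarrow> i < n \<Longrightarrow> t i \<in> carrier G" by (simp add: t_def)

lemma t_inv: "1 \<le> i \<Longrightarrow> i < n \<Longrightarrow> t i = inv (s i)"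
  by (simp add: t_def s_def vbc_inv flip_def)

lemma rr[simp]: "1 \<le> i \<Longrightarrow> i < n \<Longrightarrow> r i \<otimes> r i = \<one>"
  using rel_eq[of "[rh i, rh i]" "[]"] vbc_Cons[of "rh i" "[rh i]"]
  by (simp add: vb_relators_def r_def vbc_one)

lemma rr'[simp]: "1 \<le> i \<Longrightarrow> i < n \<Longrightarrow> x \<in> carrier G \<Longrightarrow> r i \<otimes> (r i \<otimes> x) = x"
  using rr by (simp add: m_assoc[symmetric])

lemma inv_r: "1 \<le> i \<Longrightarrow> i < n \<Longrightarrow> inv (r i) = r i"
  using rr inv_equality by simp

lemma far_rr: "1 \<le> i \<Longrightarrow> i < n \<Longrightarrow> 1 \<le> j \<Longrightarrow> j < n \<Longrightarrow> i + 2 \<le> j \<or> j + 2 \<le> i \<Longrightarrow> r i \<otimes> r j = r j \<otimes> r i"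
proof -
  assume a: "1 \<le> i" "i < n" "1 \<le> j" "j < n" "i + 2 \<le> j \<or> j + 2 \<le> i"
  have "([rh i, rh j], [rh j, rh i]) \<in> vb_relators n" using a unfolding vb_relators_def by auto
  then have "vbc n [rh i, rh j] = vbc n [rh j, rh i]" by (rule rel_eq)
  then show ?thesis using vbc_Cons[of "rh i" "[rh j]"] vbc_Cons[of "rh j" "[rh i]"] a by (simp add: r_def)
qed

lemma far_rs: "1 \<le> i \<Longrightarrow> i < n \<Longrightarrow> 1 \<le> j \<Longrightarrow> j < n \<Longrightarrow> i + 2 \<le> j \<or> j + 2 \<le> i \<Longrightarrow> r i \<otimes> s j = s j \<otimes> r i"
proof -
  assume a: "1 \<le> i" "i < n" "1 \<le> j" "j < n" "i + 2 \<le> j \<or> j + 2 \<le> i"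
  have "([sg j, rh i], [rh i, sg j]) \<in> vb_relators n" using a unfolding vb_relators_def by auto
  then have "vbc n [sg j, rh i] = vbc n [rh i, sg j]" by (rule rel_eq)
  then show ?thesis using vbc_Cons[of "rh i" "[sg j]"] vbc_Cons[of "sg j" "[rh i]"] a by (simp add: r_def s_def)
qed

lemma far_rt: "1 \<le> i \<Longrightarrow> i < n \<Longrightarrow> 1 \<le> j \<Longrightarrow> j < n \<Longrightarrow> i + 2 \<le> j \<or> j + 2 \<le> i \<Longrightarrow> r i \<otimes> t j = t j \<otimes> r i"
proof -
  assume a: "1 \<le> i" "i < n" "1 \<le> j" "j < n" "i + 2 \<le> j \<or> j + 2 \<le> i"
  have "r i \<otimes> s j = s j \<otimes> r i" using far_rs[OF a] .
  then have "inv (r i \<otimes> s j) = inv (s j \<otimes> r i)" by simp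
  then have "t j \<otimes> r i = r i \<otimes> t j" using a by (simp add: inv_mult_group t_inv inv_r)
  then show ?thesis by simp
qed

lemma braid_r: "1 \<le> i \<Longrightarrow> i + 1 < n \<Longrightarrow> r i \<otimes> r (i+1) \<otimes> r i = r (i+1) \<otimes> r i \<otimes> r (i+1)"
proof -
  assume a: "1 \<le> i" "i + 1 < n"
  have "([rh i, rh (i+1), rh i], [rh (i+1), rh i, rh (i+1)]) \<in> vb_relators n" using a unfolding vb_relators_def by auto
  then have "vbc n [rh i, rh (i+1), rh i] = vbc n [rh (i+1), rh i, rh (i+1)]" by (rule rel_eq)
  then show ?thesis using vbc_Cons[of "rh i" "[rh (i+1), rh i]"] vbc_Cons[of "rh (i+1)" "[rh i]"]
    vbc_Cons[of "rh (i+1)" "[rh i, rh (i+1)]"] vbc_Cons[of "rh i" "[rh (i+1)]"] a by (simp add: r_def m_assoc)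
qed

lemma mixed: "1 \<le> i \<Longrightarrow> i + 1 < n \<Longrightarrow> r i \<otimes> r (i+1) \<otimes> s i = s (i+1) \<otimes> r i \<otimes> r (i+1)"
proof -
  assume a: "1 \<le> i" "i + 1 < n"
  have "([rh i, rh (i+1), sg i], [sg (i+1), rh i, rh (i+1)]) \<in> vb_relators n" using a unfolding vb_relators_def by auto
  then have "vbc n [rh i, rh (i+1), sg i] = vbc n [sg (i+1), rh i, rh (i+1)]" by (rule rel_eq)
  then show ?thesis using vbc_Cons[of "rh i" "[rh (i+1), sg i]"] vbc_Cons[of "rh (i+1)" "[sg i]"]
    vbc_Cons[of "sg (i+1)" "[rh i, rh (i+1)]"] vbc_Cons[of "rh i" "[rh (i+1)]"] a by (simp add: r_def s_def m_assoc)
qed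


definition cj where "cj k x = r k \<otimes> x \<otimes> r k"

lemma cj_c[simp]: "1 \<le> k \<Longrightarrow> k < n \<Longrightarrow> x \<in> carrier G \<Longrightarrow> cj k x \<in> carrier G"
  by (simp add: cj_def)

lemma cj_mult: "1 \<le> k \<Longrightarrow> k < n \<Longrightarrow> x \<in> carrier G \<Longrightarrow> y \<in> carrier G \<Longrightarrow> cj k (x \<otimes> y) = cj k x \<otimes> cj k y"
  by (simp add: cj_def m_assoc)

lemma cj_cj[simp]: "1 \<le> k \<Longrightarrow> k < n \<Longrightarrow> x \<in> carrier G \<Longrightarrow> cj k (cj k x) = x"
  using rr by (simp add: cj_def m_assoc)

lemma cj_r_far: "1 \<le> i \<Longrightarrow> i < n \<Longrightarrow> 1 \<le> j \<Longrightarrow> j < n \<Longrightarrow> i + 2 \<le> j \<or> j + 2 \<le> i \<Longrightarrow> cj i (r j) = r j"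
  using far_rr[of i j] by (simp add: cj_def m_assoc)

lemma cj_t_far: "1 \<le> i \<Longrightarrow> i < n \<Longrightarrow> 1 \<le> j \<Longrightarrow> j < n \<Longrightarrow> i + 2 \<le> j \<or> j + 2 \<le> i \<Longrightarrow> cj i (t j) = t j"
  using far_rt[of i j] by (simp add: cj_def m_assoc)

lemma cj_comm: "1 \<le> i \<Longrightarrow> i < n \<Longrightarrow> 1 \<le> j \<Longrightarrow> j < n \<Longrightarrow> i + 2 \<le> j \<or> j + 2 \<le> i \<Longrightarrow> x \<in> carrier G \<Longrightarrow>
   cj i (cj j x) = cj j (cj i x)"
proof -
  assume a: "1 \<le> i" "i < n" "1 \<le> j" "j < n" "i + 2 \<le> j \<or> j + 2 \<le> i" "x \<in> carrier G"
  have c: "r i \<otimes> r j = r j \<otimes> r i" using far_rr[OF a(1-5)] .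
  have "cj i (cj j x) = (r i \<otimes> r j) \<otimes> x \<otimes> (r j \<otimes> r i)" using a by (simp add: cj_def m_assoc)
  also have "\<dots> = (r j \<otimes> r i) \<otimes> x \<otimes> (r i \<otimes> r j)" using c by simp
  also have "\<dots> = cj j (cj i x)" using a by (simp add: cj_def m_assoc)
  finally show ?thesis .
qed

lemma cj_braid: "1 \<le> i \<Longrightarrow> i + 1 < n \<Longrightarrow> x \<in> carrier G \<Longrightarrow>
   cj i (cj (i+1) (cj i x)) = cj (i+1) (cj i (cj (i+1) x))"
proof -
  assume a: "1 \<le> i" "i + 1 < n" "x \<in> carrier G"
  have c: "r i \<otimes> r (i+1) \<otimes> r i = r (i+1) \<otimes> r i \<otimes> r (i+1)" using braid_r a by simp
  have "cj i (cj (i+1) (cj i x)) = (r i \<otimes> r (i+1) \<otimes> r i) \<otimes> x \<otimes> (r i \<otimes> r (i+1) \<otimes> r i)"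
    using a by (simp add: cj_def m_assoc)
  also have "\<dots> = (r (i+1) \<otimes> r i \<otimes> r (i+1)) \<otimes> x \<otimes> (r (i+1) \<otimes> r i \<otimes> r (i+1))" using c by simp
  also have "\<dots> = cj (i+1) (cj i (cj (i+1) x))" using a by (simp add: cj_def m_assoc)
  finally show ?thesis .
qed

lemma cj_braid_r: "1 \<le> i \<Longrightarrow> i + 1 < n \<Longrightarrow> cj i (r (i+1)) = cj (i+1) (r i)"
  using braid_r[of i] by (simp add: cj_def)

lemma cj_braid_r2: "1 \<le> i \<Longrightarrow> i + 1 < n \<Longrightarrow> cj i (cj (i+1) (r i)) = r (i+1)"
proof -
  assume a: "1 \<le> i" "i + 1 < n"
  have "cj i (cj (i+1) (r i)) = cj i (cj i (r (i+1)))" using cj_braid_r[OF a] by simp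
  then show ?thesis using a by simp
qed

lemma M: "1 \<le> i \<Longrightarrow> i + 1 < n \<Longrightarrow> t (i+1) = cj i (cj (i+1) (t i))"
proof -
  assume a: "1 \<le> i" "i + 1 < n"
  define W where "W = r i \<otimes> r (i+1)"
  have W: "W \<in> carrier G" using a by (simp add: W_def)
  have Wi: "inv (r i \<otimes> r (i+1)) = r (i+1) \<otimes> r i" using a by (simp add: inv_mult_group inv_r)
  have "W \<otimes> s i = s (i+1) \<otimes> W" using mixed[OF a] a by (simp add: W_def m_assoc)
  then have "W \<otimes> s i \<otimes> inv W = s (i+1)" using W a by (simp add: m_assoc)
  then have "inv (s (i+1)) = inv (W \<otimes> s i \<otimes> inv W)" by simp
  also have "\<dots> = W \<otimes> inv (s i) \<otimes> inv W" using W a by (simp add: inv_mult_group m_assoc)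
  finally have "t (i+1) = W \<otimes> t i \<otimes> inv W" using a t_inv by simp
  then show ?thesis using a Wi by (simp add: W_def cj_def m_assoc)
qed

lemma cj_r_self: "1 \<le> k \<Longrightarrow> k < n \<Longrightarrow> cj k (r k) = r k"
  by (simp add: cj_def m_assoc)

definition core where "core e a = (if e then r a \<otimes> t a else t a \<otimes> r a)"

lemma core_c[simp]: "1 \<le> a \<Longrightarrow> a < n \<Longrightarrow> core e a \<in> carrier G" by (simp add: core_def)

lemma core_far: "1 \<le> k \<Longrightarrow> k < n \<Longrightarrow> 1 \<le> a \<Longrightarrow> a < n \<Longrightarrow> k + 2 \<le> a \<or> a + 2 \<le> k \<Longrightarrow> cj k (core e a) = core e a"
  by (simp add: core_def cj_mult cj_r_far cj_t_far)

lemma core_flip: "1 \<le> a \<Longrightarrow> a < n \<Longrightarrow> cj a (core e a) = core (\<not> e) a"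
  by (simp add: core_def cj_def m_assoc)

lemma ID2: "1 \<le> a \<Longrightarrow> a + 1 < n \<Longrightarrow> cj a (cj (a+1) (core e a)) = core e (a+1)"
proof -
  assume a: "1 \<le> a" "a + 1 < n"
  have "cj a (cj (a+1) (t a)) = t (a+1)" using M[OF a] by simp
  moreover have "cj a (cj (a+1) (r a)) = r (a+1)" using cj_braid_r2[OF a] .
  ultimately show ?thesis using a by (simp add: core_def cj_mult)
qed

lemma ID1: "1 \<le> c \<Longrightarrow> c + 1 < n \<Longrightarrow> cj c (core e (c+1)) = cj (c+1) (core e c)"
proof -
  assume a: "1 \<le> c" "c + 1 < n"
  have "cj c (t (c+1)) = cj (c+1) (t c)" using M[OF a] a by simp
  moreover have "cj c (r (c+1)) = cj (c+1) (r c)" using cj_braid_r[OF a] .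
  ultimately show ?thesis using a by (simp add: core_def cj_mult)
qed


primrec Lc where
  "Lc e a 0 = core e a"
| "Lc e a (Suc d) = cj (a + d + 1) (Lc e a d)"

lemma Lc_c[simp]: "1 \<le> a \<Longrightarrow> a + d < n \<Longrightarrow> Lc e a d \<in> carrier G"
  by (induction d) auto

lemma L_far_hi: "1 \<le> a \<Longrightarrow> a + d + 2 \<le> k \<Longrightarrow> k < n \<Longrightarrow> cj k (Lc e a d) = Lc e a d"
proof (induction d)
  case 0 then show ?case by (simp add: core_far)
next
  case (Suc d)
  then have "cj k (cj (a + d + 1) (Lc e a d)) = cj (a + d + 1) (cj k (Lc e a d))"
    by (intro cj_comm) auto
  then show ?case using Suc by simp
qed

lemma L_far_lo: "k + 2 \<le> a \<Longrightarrow> 1 \<le> k \<Longrightarrow> a + d < n \<Longrightarrow> cj k (Lc e a d) = Lc e a d"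
proof (induction d)
  case 0 then show ?case by (simp add: core_far)
next
  case (Suc d)
  then have "cj k (cj (a + d + 1) (Lc e a d)) = cj (a + d + 1) (cj k (Lc e a d))"
    by (intro cj_comm) auto
  then show ?case using Suc by simp
qed

lemma L_mid: "1 \<le> a \<Longrightarrow> a < k \<Longrightarrow> k < a + d \<Longrightarrow> a + d < n \<Longrightarrow> cj k (Lc e a d) = Lc e a d"
proof (induction d)
  case 0 then show ?case by simp
next
  case (Suc d)
  show ?case
  proof (cases "k < a + d")
    case True
    then have "cj k (cj (a + d + 1) (Lc e a d)) = cj (a + d + 1) (cj k (Lc e a d))"
      using Suc.prems by (intro cj_comm) auto
    then show ?thesis using Suc True by simp
  next
    case False
    then have k: "k = a + d" using Suc.prems by simp
    then obtain d' where d': "d = Suc d'" using Suc.prems by (cases d) auto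
    have kk: "k = a + d' + 1" using k d' by simp
    have Y: "Lc e a d' \<in> carrier G" using Suc.prems d' by simp
    have Yf: "cj (k + 1) (Lc e a d') = Lc e a d'" using Suc.prems kk by (intro L_far_hi) auto
    have "cj k (Lc e a (Suc d)) = cj k (cj (k+1) (cj k (Lc e a d')))" using d' kk by (simp add: add.commute)
    also have "\<dots> = cj (k+1) (cj k (cj (k+1) (Lc e a d')))" using Suc.prems Y kk by (intro cj_braid) auto
    also have "\<dots> = Lc e a (Suc d)" using Yf d' kk by (simp add: add.commute)
    finally show ?thesis .
  qed
qed

lemma L_top2: "1 \<le> a \<Longrightarrow> a + d + 1 < n \<Longrightarrow> cj (a + d + 1) (Lc e a (Suc d)) = Lc e a d"
  by simp

lemma L_a: "1 \<le> a \<Longrightarrow> a + d + 1 < n \<Longrightarrow> cj a (Lc e a (Suc d)) = Lc e (a+1) d"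
proof (induction d)
  case 0 then show ?case using ID2[of a e] by simp
next
  case (Suc d)
  have "cj a (Lc e a (Suc (Suc d))) = cj a (cj (a + Suc d + 1) (Lc e a (Suc d)))" by simp
  also have "\<dots> = cj (a + Suc d + 1) (cj a (Lc e a (Suc d)))" using Suc.prems by (intro cj_comm) auto
  also have "\<dots> = Lc e (a+1) (Suc d)" using Suc by simp
  finally show ?case .
qed

lemma L_am1: "2 \<le> a \<Longrightarrow> a + d < n \<Longrightarrow> cj (a - 1) (Lc e a d) = Lc e (a - 1) (Suc d)"
proof (induction d)
  case 0 then show ?case using ID1[of "a - 1" e] by simp
next
  case (Suc d)
  have "cj (a - 1) (Lc e a (Suc d)) = cj (a - 1) (cj (a + d + 1) (Lc e a d))" by simp
  also have "\<dots> = cj (a + d + 1) (cj (a - 1) (Lc e a d))" using Suc.prems by (intro cj_comm) auto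
  also have "\<dots> = Lc e (a - 1) (Suc (Suc d))" using Suc by simp
  finally show ?case .
qed

lemma L_conj:
  assumes "1 \<le> x" "x < y" "y \<le> n" "1 \<le> k" "k < n"
  shows "cj k (Lc e x (y - x - 1)) = (if k = x \<and> y = x + 1 then Lc (\<not> e) x 0
            else Lc e (tr k x) (tr k y - tr k x - 1))"
    and "\<not> (k = x \<and> y = x + 1) \<Longrightarrow> tr k x < tr k y"
proof -
  define d where "d = y - x - 1"
  have y: "y = x + d + 1" using assms d_def by simp
  have "cj k (Lc e x d) = (if k = x \<and> y = x + 1 then Lc (\<not> e) x 0
            else Lc e (tr k x) (tr k y - tr k x - 1)) \<and> (\<not> (k = x \<and> y = x + 1) \<longrightarrow> tr k x < tr k y)"
  proof -
    consider "k + 2 \<le> x" | "k + 1 = x" | "k = x" "d = 0" | "k = x" "d > 0" | "x < k" "k + 1 < y"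
      | "k + 1 = y" "x < k" | "k = y" | "y < k" by linarith
    then show ?thesis
    proof cases
      case 1 then show ?thesis using assms y L_far_lo[of k x d e] by (auto simp: tr_def)
    next
      case 2 then show ?thesis using assms y L_am1[of x d e] by (auto simp: tr_def)
    next
      case 3 then show ?thesis using assms y core_flip[of x e] by (auto simp: tr_def)
    next
      case 4
      then obtain d' where "d = Suc d'" by (cases d) auto
      then show ?thesis using assms y 4 L_a[of x d' e] by (auto simp: tr_def)
    next
      case 5 then show ?thesis using assms y L_mid[of x k d e] by (auto simp: tr_def)
    next
      case 6
      then obtain d' where "d = Suc d'" using y by (cases d) auto
      then show ?thesis using assms y 6 L_top2[of x d' e] by (auto simp: tr_def)
    next
      case 7 then show ?thesis using assms y by (auto simp: tr_def)
    next
      case 8 then show ?thesis using assms y L_far_hi[of x d k e] by (auto simp: tr_def)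
    qed
  qed
  then show "cj k (Lc e x (y - x - 1)) = (if k = x \<and> y = x + 1 then Lc (\<not> e) x 0
            else Lc e (tr k x) (tr k y - tr k x - 1))"
    and "\<not> (k = x \<and> y = x + 1) \<Longrightarrow> tr k x < tr k y" using d_def by auto
qed


definition Lam where "Lam a b = (if a < b then Lc True a (b - a - 1) else Lc False b (a - b - 1))"

lemma Lam_c[simp]: "1 \<le> a \<Longrightarrow> a \<le> n \<Longrightarrow> 1 \<le> b \<Longrightarrow> b \<le> n \<Longrightarrow> a \<noteq> b \<Longrightarrow> Lam a b \<in> carrier G"
  by (auto simp: Lam_def)

lemma tr_range: "1 \<le> k \<Longrightarrow> k < n \<Longrightarrow> 1 \<le> a \<Longrightarrow> a \<le> n \<Longrightarrow> 1 \<le> tr k a \<and> tr k a \<le> n"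
  by (auto simp: tr_def)

lemma Lam_conj:
  assumes "1 \<le> a" "a \<le> n" "1 \<le> b" "b \<le> n" "a \<noteq> b" "1 \<le> k" "k < n"
  shows "cj k (Lam a b) = Lam (tr k a) (tr k b)"
proof (cases "a < b")
  case True
  show ?thesis
  proof (cases "k = a \<and> b = a + 1")
    case True then show ?thesis using assms L_conj(1)[where x=a and y=b and k=k] `a < b` by (auto simp: Lam_def tr_def)
  next
    case False then show ?thesis using assms L_conj[where x=a and y=b and k=k] `a < b` by (auto simp: Lam_def)
  qed
next
  case False
  then have ba: "b < a" using assms by simp
  show ?thesis
  proof (cases "k = b \<and> a = b + 1")
    case True then show ?thesis using assms L_conj(1)[where x=b and y=a and k=k] ba by (auto simp: Lam_def tr_def)
  next
    case False then show ?thesis using assms L_conj[where x=b and y=a and k=k] ba by (auto simp: Lam_def)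
  qed
qed

end

lemma perm_range: "set p \<subseteq> {1..<n} \<Longrightarrow> 1 \<le> a \<Longrightarrow> a \<le> n \<Longrightarrow> 1 \<le> perm p a \<and> perm p a \<le> n"
  by (induction p) (auto simp: tr_def)

lemma tr_inj: "tr k a = tr k b \<Longrightarrow> a = b"
  by (metis tr_tr)

lemma perm_inj: "perm p a = perm p b \<Longrightarrow> a = b"
  by (induction p arbitrary: a b) (auto dest: tr_inj)

lemma perm_rev: "perm l \<circ> perm (rev l) = id"
proof (induction l)
  case Nil then show ?case by simp
next
  case (Cons a l)
  have "\<And>x. perm l (perm (rev l) x) = x" using Cons by (simp add: fun_eq_iff)
  then show ?case by (simp add: fun_eq_iff)
qed

context vbG begin

lemma map_rh_words: "set p \<subseteq> {1..<n} \<Longrightarrow> map rh p \<in> vb_words n"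
  unfolding vb_words_def vb_letters_def by force

lemma gprod_r: "set p \<subseteq> {1..<n} \<Longrightarrow> gprod G r p = vbc n (map rh p)"
proof (induction p)
  case Nil then show ?case by (simp add: vbc_one)
next
  case (Cons a p)
  then have "map rh p \<in> vb_words n" "rh a \<in> vb_letters n" using map_rh_words[of p] by auto
  then show ?case using Cons vbc_Cons[of "rh a" "map rh p"] by (simp add: r_def)
qed

lemma gprod_r_c[simp]: "set p \<subseteq> {1..<n} \<Longrightarrow> gprod G r p \<in> carrier G"
  by (simp add: gprod_r map_rh_words)

lemma gprod_r_app: "set p \<subseteq> {1..<n} \<Longrightarrow> set q \<subseteq> {1..<n} \<Longrightarrow> gprod G r (p @ q) = gprod G r p \<otimes> gprod G r q"
  by (induction p) (auto simp: m_assoc)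

lemma rchain_Suc: "rchain x (Suc (Suc (x + d))) = rh (Suc (x + d)) # rchain x (Suc (x + d))"
  unfolding rchain_def by (simp only: upt_Suc_append[of "Suc x" "Suc (x+d)"] le_add1 Suc_le_mono rev_append) simp

lemma set_rchain: "set (rchain x y) = (\<lambda>j. (Rh j, True)) ` {Suc x..<y}"
  unfolding rchain_def by (simp only: set_map set_rev set_upt)

lemma rchain_words: "1 \<le> x \<Longrightarrow> x + d < n \<Longrightarrow> rchain x (x + d + 1) \<in> vb_words n"
proof -
  assume a: "1 \<le> x" "x + d < n"
  have "set (rchain x (x + d + 1)) = (\<lambda>j. (Rh j, True)) ` {Suc x..<x + d + 1}" by (rule set_rchain)
  then show ?thesis using a by (auto simp: vb_words_def vb_letters_def)
qed

lemma lam_gen: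
  assumes "1 \<le> x" "w \<in> vb_words n" "vbc n w = core e x"
  shows "x + d < n \<Longrightarrow> vbc n (rchain x (x + d + 1) @ w @ rev (rchain x (x + d + 1))) = Lc e x d"
proof (induction d)
  case 0 then show ?case using assms by (simp add: rchain_def)
next
  case (Suc d)
  define R where "R = rchain x (x + d + 1)"
  have R: "R \<in> vb_words n" using Suc.prems assms rchain_words[of x d] by (simp add: R_def)
  have "rchain x (x + Suc d + 1) @ w @ rev (rchain x (x + Suc d + 1)) = rh (x + d + 1) # (R @ w @ rev R) @ [rh (x + d + 1)]"
    using rchain_Suc[of x d] by (simp add: R_def)
  moreover have "vbc n (rh (x + d + 1) # (R @ w @ rev R) @ [rh (x + d + 1)]) =
     r (x + d + 1) \<otimes> vbc n (R @ w @ rev R) \<otimes> r (x + d + 1)"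
  proof -
    have l: "rh (x + d + 1) \<in> vb_letters n" using assms Suc.prems by simp
    have m: "R @ w @ rev R \<in> vb_words n" using R assms by (simp add: vb_words_def)
    show ?thesis using vbc_Cons[OF l, of "(R @ w @ rev R) @ [rh (x + d + 1)]"] vbc_mult[OF m, of "[rh (x + d + 1)]"] l m
      by (simp add: r_def m_assoc)
  qed
  ultimately show ?case using Suc R_def by (simp add: cj_def)
qed

lemma vbc_lam:
  assumes "1 \<le> a" "a \<le> n" "1 \<le> b" "b \<le> n" "a \<noteq> b"
  shows "vbc n (lam a b) = Lam a b"
proof (cases "a < b")
  case True
  have "vbc n [rh a, sgi a] = core True a" using assms True vbc_Cons[of "rh a" "[sgi a]"]
    by (simp add: core_def r_def t_def)
  then have "vbc n (rchain a (a + (b - a - 1) + 1) @ [rh a, sgi a] @ rev (rchain a (a + (b - a - 1) + 1))) = Lc True a (b - a - 1)"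
    using assms True by (intro lam_gen) auto
  then show ?thesis using True by (simp add: lam_def Lam_def)
next
  case False
  then have ba: "b < a" using assms by simp
  have "vbc n [sgi b, rh b] = core False b" using assms ba vbc_Cons[of "sgi b" "[rh b]"]
    by (simp add: core_def r_def t_def)
  then have "vbc n (rchain b (b + (a - b - 1) + 1) @ [sgi b, rh b] @ rev (rchain b (b + (a - b - 1) + 1))) = Lc False b (a - b - 1)"
    using assms ba by (intro lam_gen) auto
  then show ?thesis using ba by (simp add: lam_def Lam_def)
qed

lemma lam_words: "1 \<le> a \<Longrightarrow> a \<le> n \<Longrightarrow> 1 \<le> b \<Longrightarrow> b \<le> n \<Longrightarrow> a \<noteq> b \<Longrightarrow> lam a b \<in> vb_words n"
  by (auto simp: lam_def rchain_def vb_words_def vb_letters_def)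

lemma push:
  assumes p: "set p \<subseteq> {1..<n}" and ab: "1 \<le> a" "a \<le> n" "1 \<le> b" "b \<le> n" "a \<noteq> b"
  shows "gprod G r p \<otimes> Lam a b = Lam (perm p a) (perm p b) \<otimes> gprod G r p"
  using p
proof (induction p)
  case Nil then show ?case using ab by simp
next
  case (Cons k p)
  have k: "1 \<le> k" "k < n" using Cons.prems by auto
  have pp: "set p \<subseteq> {1..<n}" using Cons.prems by auto
  have ra: "1 \<le> perm p a" "perm p a \<le> n" "1 \<le> perm p b" "perm p b \<le> n" "perm p a \<noteq> perm p b"
    using perm_range[OF pp] ab perm_inj by blast+
  have X: "Lam (perm p a) (perm p b) \<in> carrier G" using ra by simp
  have "gprod G r (k # p) \<otimes> Lam a b = r k \<otimes> (Lam (perm p a) (perm p b) \<otimes> gprod G r p)"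
    using Cons pp k ab by (simp add: m_assoc)
  also have "\<dots> = cj k (Lam (perm p a) (perm p b)) \<otimes> (r k \<otimes> gprod G r p)"
    using X k pp by (simp add: cj_def m_assoc)
  also have "\<dots> = Lam (perm (k # p) a) (perm (k # p) b) \<otimes> gprod G r (k # p)"
    using Lam_conj[OF ra k] by simp
  finally show ?case .
qed

lemma push_inv:
  assumes p: "set p \<subseteq> {1..<n}" and ab: "1 \<le> a" "a \<le> n" "1 \<le> b" "b \<le> n" "a \<noteq> b"
  shows "gprod G r p \<otimes> inv (Lam a b) = inv (Lam (perm p a) (perm p b)) \<otimes> gprod G r p"
proof -
  have ra: "1 \<le> perm p a" "perm p a \<le> n" "1 \<le> perm p b" "perm p b \<le> n" "perm p a \<noteq> perm p b"
    using perm_range[OF p] ab perm_inj by blast+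
  define X where "X = gprod G r p"
  define L where "L = Lam a b"
  define L' where "L' = Lam (perm p a) (perm p b)"
  have c: "X \<in> carrier G" "L \<in> carrier G" "L' \<in> carrier G" using p ab ra by (auto simp: X_def L_def L'_def)
  have e: "X \<otimes> L = L' \<otimes> X" using push[OF p ab] by (simp add: X_def L_def L'_def)
  have "X \<otimes> inv L = inv L' \<otimes> (L' \<otimes> X) \<otimes> inv L" using c by (simp add: m_assoc[symmetric])
  also have "\<dots> = inv L' \<otimes> (X \<otimes> L) \<otimes> inv L" using e by simp
  also have "\<dots> = inv L' \<otimes> X" using c by (simp add: m_assoc)
  finally show ?thesis by (simp add: X_def L_def L'_def)
qed

end

context vbG begin

definition elt :: "nat \<times> nat \<times> bool \<Rightarrow> vword set" where
  "elt y = (case y of (a, b, e) \<Rightarrow> if e then Lam a b else inv (Lam a b))"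

definition lprod where "lprod u = foldr (\<lambda>y acc. elt y \<otimes> acc) u \<one>"

definition okp :: "nat \<times> nat \<times> bool \<Rightarrow> bool" where
  "okp y \<longleftrightarrow> 1 \<le> fst y \<and> fst y \<le> n \<and> 1 \<le> fst (snd y) \<and> fst (snd y) \<le> n \<and> fst y \<noteq> fst (snd y)"

definition valid :: "(nat \<times> nat \<times> bool) list \<Rightarrow> bool" where
  "valid u \<longleftrightarrow> (\<forall>y \<in> set u. okp y)"

lemma valid_simps[simp]: "valid [] " "valid (y # u) \<longleftrightarrow> okp y \<and> valid u" "valid (u @ v) \<longleftrightarrow> valid u \<and> valid v"
  by (auto simp: valid_def)

lemma elt_c[simp]: "okp y \<Longrightarrow> elt y \<in> carrier G"
  by (auto simp: okp_def elt_def split: prod.splits)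

lemma lprod_Nil[simp]: "lprod [] = \<one>" by (simp add: lprod_def)
lemma lprod_Cons[simp]: "lprod (y # u) = elt y \<otimes> lprod u" by (simp add: lprod_def)

lemma lprod_c[simp]: "valid u \<Longrightarrow> lprod u \<in> carrier G"
  by (induction u) auto

lemma lprod_app: "valid u \<Longrightarrow> valid v \<Longrightarrow> lprod (u @ v) = lprod u \<otimes> lprod v"
  by (induction u) (auto simp: m_assoc)

lemma lprod_single: "okp y \<Longrightarrow> lprod [y] = elt y" by (simp add: lprod_def)

lemma core_False: "1 \<le> i \<Longrightarrow> i < n \<Longrightarrow> t i = Lam (i + 1) i \<otimes> r i"
  by (simp add: Lam_def core_def m_assoc)

lemma s_eq: "1 \<le> i \<Longrightarrow> i < n \<Longrightarrow> s i = r i \<otimes> inv (Lam (i + 1) i)"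
proof -
  assume i: "1 \<le> i" "i < n"
  have L: "Lam (i + 1) i \<in> carrier G" using i by simp
  have "s i = inv (t i)" using i t_inv by simp
  also have "\<dots> = inv (Lam (i + 1) i \<otimes> r i)" using core_False[OF i] by simp
  also have "\<dots> = r i \<otimes> inv (Lam (i + 1) i)" using i L by (simp add: inv_mult_group inv_r)
  finally show ?thesis .
qed

lemma decomp: "w \<in> vb_words n \<Longrightarrow> \<exists>u p. valid u \<and> set p \<subseteq> {1..<n} \<and> vbc n w = lprod u \<otimes> gprod G r p"
proof (induction w rule: rev_induct)
  case Nil then show ?case by (intro exI[of _ "[]"]) (auto simp: lprod_def vbc_one)
next
  case (snoc x w)
  then have w: "w \<in> vb_words n" and x: "x \<in> vb_letters n" by auto
  obtain u p where up: "valid u" "set p \<subseteq> {1..<n}" "vbc n w = lprod u \<otimes> gprod G r p" using snoc w by blast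
  obtain g e where xe: "x = (g, e)" by (cases x)
  define i where "i = gidx g"
  have i: "1 \<le> i" "i < n" using x xe by (auto simp: i_def)
  have pi: "set (p @ [i]) \<subseteq> {1..<n}" using up i by auto
  have ex: "vbc n (w @ [x]) = lprod u \<otimes> gprod G r p \<otimes> vbc n [x]" using vbc_mult[OF w, of "[x]"] x up by simp
  have Uc: "lprod u \<in> carrier G" "gprod G r p \<in> carrier G" using up by auto
  have gpi: "gprod G r (p @ [i]) = gprod G r p \<otimes> r i" using gprod_r_app[OF up(2), of "[i]"] i by simp
  show ?case
  proof (cases g)
    case (Rh j)
    then have j: "j = i" by (simp add: i_def)
    have "vbc n [x] = r i"
    proof (cases e)
      case True then show ?thesis using xe Rh j by (simp add: r_def)
    next
      case False
      have "vbc n [x] = vbc n (winv [rh i])" using xe Rh j False by (simp add: flip_def)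
      also have "\<dots> = inv (r i)" using i by (simp add: r_def vbc_inv)
      finally show ?thesis using i by (simp add: inv_r)
    qed
    then have "vbc n (w @ [x]) = lprod u \<otimes> gprod G r (p @ [i])" using ex gpi Uc i by (simp add: m_assoc)
    then show ?thesis using up pi by blast
  next
    case (Sg j)
    then have j: "j = i" by (simp add: i_def)
    have ab: "1 \<le> i + 1" "i + 1 \<le> n" "1 \<le> i" "i \<le> n" "i + 1 \<noteq> i" using i by auto
    show ?thesis
    proof (cases e)
      case False
      define y where "y = (perm p (i + 1), perm p i, True)"
      have vy: "okp y" using perm_range[OF up(2)] perm_inj[of p "i+1" i] ab unfolding y_def okp_def by auto
      have "vbc n [x] = t i" using xe Sg j False by (simp add: t_def)
      then have "vbc n (w @ [x]) = lprod u \<otimes> (gprod G r p \<otimes> Lam (i + 1) i) \<otimes> r i"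
        using ex core_False[OF i] Uc i by (simp add: m_assoc)
      also have "\<dots> = lprod u \<otimes> (elt y \<otimes> gprod G r p) \<otimes> r i"
        using push[OF up(2) ab] by (simp add: y_def elt_def)
      also have "\<dots> = lprod (u @ [y]) \<otimes> gprod G r (p @ [i])"
        using lprod_app[of u "[y]"] up(1) vy lprod_single[OF vy] gpi Uc vy i by (simp add: m_assoc)
      finally show ?thesis using up vy pi by (intro exI[of _ "u @ [y]"] exI[of _ "p @ [i]"]) auto
    next
      case True
      define y where "y = (perm (p @ [i]) (i + 1), perm (p @ [i]) i, False)"
      have vy: "okp y" using perm_range[OF pi] perm_inj[of "p @ [i]" "i+1" i] ab unfolding y_def okp_def by auto
      have "vbc n [x] = s i" using xe Sg j True by (simp add: s_def)
      then have "vbc n (w @ [x]) = lprod u \<otimes> (gprod G r (p @ [i]) \<otimes> inv (Lam (i + 1) i))"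
        using ex s_eq[OF i] Uc i gpi by (simp add: m_assoc)
      also have "\<dots> = lprod u \<otimes> (elt y \<otimes> gprod G r (p @ [i]))"
        using push_inv[OF pi ab] by (simp add: y_def elt_def)
      also have "\<dots> = lprod (u @ [y]) \<otimes> gprod G r (p @ [i])"
        using lprod_app[of u "[y]"] up(1) vy lprod_single[OF vy] Uc vy pi by (simp add: m_assoc)
      finally show ?thesis using up vy pi by (intro exI[of _ "u @ [y]"] exI[of _ "p @ [i]"]) auto
    qed
  qed
qed

end

definition tp :: "nat \<Rightarrow> nat \<Rightarrow> nat \<Rightarrow> nat" where
  "tp a b = (\<lambda>k. if k = a then b else if k = b then a else k)"

lemma foldr_comp: "foldr (\<lambda>x f. g x \<circ> f) u h = foldr (\<lambda>x f. g x \<circ> f) u id \<circ> h"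
  by (induction u) (auto simp: comp_assoc)

lemma iota1_Nil[simp]: "iota1 [] = id" by (simp add: iota1_def)
lemma iota1_Cons[simp]: "iota1 (x # w) = tr (gidx (fst x)) \<circ> iota1 w" by (simp add: iota1_def)
lemma iota2_Nil[simp]: "iota2 [] = id" by (simp add: iota2_def)
lemma iota2_Cons[simp]: "iota2 (x # w) = iota2_letter x \<circ> iota2 w" by (simp add: iota2_def)

lemma iota1_app[simp]: "iota1 (u @ v) = iota1 u \<circ> iota1 v"
  by (induction u) (auto simp: comp_assoc)
lemma iota2_app[simp]: "iota2 (u @ v) = iota2 u \<circ> iota2 v"
  by (induction u) (auto simp: comp_assoc)

lemma iota2_letter_flip[simp]: "iota2_letter (flip x) = iota2_letter x"
  by (cases x; cases "fst x") (auto simp: flip_def)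

lemma iota2_letter_inv: "iota2_letter x \<circ> iota2_letter x = id"
  by (cases x; cases "fst x") (auto simp: tr_comp_tr)

lemma iota2_letter_inv'[simp]: "iota2_letter x (iota2_letter x y) = y"
  using iota2_letter_inv[of x] by (simp add: fun_eq_iff)

lemma tr_braid_pt: "tr i (tr (Suc i) (tr i a)) = tr (Suc i) (tr i (tr (Suc i) a))"
  by (simp add: tr_def)

lemma iota1_winv: "iota1 (winv w) \<circ> iota1 w = id"
proof (induction w)
  case Nil then show ?case by simp
next
  case (Cons x w)
  have "iota1 (winv (x # w)) \<circ> iota1 (x # w) = iota1 (winv w) \<circ> (tr (gidx (fst x)) \<circ> tr (gidx (fst x))) \<circ> iota1 w"
    by (simp add: flip_def comp_assoc)
  then show ?case using Cons by (simp add: tr_comp_tr)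
qed

lemma iota2_winv: "iota2 (winv w) \<circ> iota2 w = id"
proof (induction w)
  case Nil then show ?case by simp
next
  case (Cons x w)
  have "iota2 (winv (x # w)) \<circ> iota2 (x # w) = iota2 (winv w) \<circ> (iota2_letter x \<circ> iota2_letter x) \<circ> iota2 w"
    by (simp add: comp_assoc)
  then show ?case using Cons by (simp add: iota2_letter_inv fun_eq_iff)
qed

lemma comp_id_inv: "f \<circ> g = id \<Longrightarrow> g \<circ> g = id \<Longrightarrow> f = g"
  by (metis comp_assoc comp_id)

lemma iota_rel: "(u, v) \<in> vb_rel n \<Longrightarrow> iota1 u = iota1 v \<and> iota2 u = iota2 v"
proof (induction rule: vb_rel.induct)
  case (cancel x)
  then show ?case
    by (cases x; cases "fst x") (auto simp: flip_def tr_comp_tr)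
next
  case (relator u v)
  then show ?case unfolding vb_relators_def
    by (auto simp: tr_far tr_far[symmetric] comp_assoc tr_comp_tr fun_eq_iff tr_braid_pt)
qed auto

lemma iota_map_rh: "iota1 (map rh p) = perm p" "iota2 (map rh p) = perm p"
  by (induction p) auto


lemma tp_sym: "tp a b = tp b a" by (auto simp: tp_def fun_eq_iff)
lemma tp_tp: "tp a b \<circ> tp a b = id" by (auto simp: tp_def fun_eq_iff)

lemma rchain_Suc': "rchain x (Suc (Suc (x + d))) = rh (Suc (x + d)) # rchain x (Suc (x + d))"
  unfolding rchain_def by (simp only: upt_Suc_append[of "Suc x" "Suc (x+d)"] le_add1 Suc_le_mono rev_append) simp

lemma rchain_0: "rchain x (Suc x) = []" by (simp add: rchain_def)

lemma iota_lam_gen: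
  assumes "iota2 c = tr x" "iota1 c = id"
  shows "iota2 (rchain x (x + d + 1) @ c @ rev (rchain x (x + d + 1))) = tp x (x + d + 1) \<and>
         iota1 (rchain x (x + d + 1) @ c @ rev (rchain x (x + d + 1))) = id"
proof (induction d)
  case 0 then show ?case using assms by (simp add: rchain_0 tr_def tp_def fun_eq_iff)
next
  case (Suc d)
  define R where "R = rchain x (x + d + 1)"
  have e: "rchain x (x + Suc d + 1) = rh (x + d + 1) # R" using rchain_Suc'[of x d] by (simp add: R_def)
  have "iota2 (rchain x (x + Suc d + 1) @ c @ rev (rchain x (x + Suc d + 1))) =
        tr (x + d + 1) \<circ> iota2 (R @ c @ rev R) \<circ> tr (x + d + 1)"
    "iota1 (rchain x (x + Suc d + 1) @ c @ rev (rchain x (x + Suc d + 1))) =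
        tr (x + d + 1) \<circ> iota1 (R @ c @ rev R) \<circ> tr (x + d + 1)"
    unfolding e by (simp_all add: comp_assoc)
  then show ?case using Suc unfolding R_def by (auto simp: fun_eq_iff tp_def tr_def)
qed

lemma iota_lam: "a \<noteq> b \<Longrightarrow> iota1 (lam a b) = id \<and> iota2 (lam a b) = tp a b"
proof (cases "a < b")
  case True
  have "iota2 [rh a, sgi a] = tr a" "iota1 [rh a, sgi a] = id" by (simp_all add: tr_comp_tr)
  from iota_lam_gen[OF this, of "b - a - 1"] show ?thesis using True by (simp add: lam_def)
next
  case False
  assume "a \<noteq> b"
  then have ba: "b < a" using False by simp
  have "iota2 [sgi b, rh b] = tr b" "iota1 [sgi b, rh b] = id" by (simp_all add: tr_comp_tr)
  from iota_lam_gen[OF this, of "a - b - 1"] show ?thesis using ba by (simp add: lam_def tp_sym)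
qed

lemma iota_winv_lam: "a \<noteq> b \<Longrightarrow> iota1 (winv (lam a b)) = id \<and> iota2 (winv (lam a b)) = tp a b"
  using iota1_winv[of "lam a b"] iota2_winv[of "lam a b"] iota_lam[of a b] comp_id_inv[OF _ tp_tp]
  by auto

context vbG begin

lemma iota_cls: "w \<in> vb_words n \<Longrightarrow> w' \<in> vbc n w \<Longrightarrow> iota1 w' = iota1 w \<and> iota2 w' = iota2 w"
  using iota_rel in_vbc_iff by metis

lemma VP_iff: assumes w: "w \<in> vb_words n" shows "vbc n w \<in> VP n \<longleftrightarrow> iota1 w = id"
proof
  assume "vbc n w \<in> VP n"
  then have "\<forall>w'\<in>vbc n w. iota1 w' = id" unfolding VP_def by blast
  then show "iota1 w = id" using in_vbc[OF w] by blast
next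
  assume i: "iota1 w = id"
  have "\<forall>w'\<in>vbc n w. iota1 w' = id" using iota_cls[OF w] i by simp
  moreover have "vbc n w \<in> carrier (VB n)" using w by (rule vbc_carrier)
  ultimately show "vbc n w \<in> VP n" unfolding VP_def by simp
qed

lemma Hn_iff: assumes w: "w \<in> vb_words n" shows "vbc n w \<in> Hn n \<longleftrightarrow> iota2 w = id"
proof
  assume "vbc n w \<in> Hn n"
  then have "\<forall>w'\<in>vbc n w. iota2 w' = id" unfolding Hn_def by blast
  then show "iota2 w = id" using in_vbc[OF w] by blast
next
  assume i: "iota2 w = id"
  have "\<forall>w'\<in>vbc n w. iota2 w' = id" using iota_cls[OF w] i by simp
  moreover have "vbc n w \<in> carrier (VB n)" using w by (rule vbc_carrier)
  ultimately show "vbc n w \<in> Hn n" unfolding Hn_def by simp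
qed

lemma VP_sub: "VP n \<subseteq> carrier G" unfolding GVB VP_def by blast
lemma Hn_sub: "Hn n \<subseteq> carrier G" unfolding GVB Hn_def by blast

lemma carrier_cases: "x \<in> carrier G \<Longrightarrow> (\<And>w. w \<in> vb_words n \<Longrightarrow> x = vbc n w \<Longrightarrow> P) \<Longrightarrow> P"
  using carrier_G by auto

lemma iota1_winv': "iota1 w = id \<Longrightarrow> iota1 (winv w) = id"
  using iota1_winv[of w] by simp

lemma iota2_winv': "iota2 w = id \<Longrightarrow> iota2 (winv w) = id"
  using iota2_winv[of w] by simp

lemma VP_elem: "a \<in> VP n \<Longrightarrow> \<exists>w. w \<in> vb_words n \<and> a = vbc n w \<and> iota1 w = id"
proof -
  assume a: "a \<in> VP n"
  then have "a \<in> carrier G" using VP_sub by auto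
  then obtain w where "w \<in> vb_words n" "a = vbc n w" using carrier_G by auto
  then show ?thesis using VP_iff a by auto
qed

lemma Hn_elem: "a \<in> Hn n \<Longrightarrow> \<exists>w. w \<in> vb_words n \<and> a = vbc n w \<and> iota2 w = id"
proof -
  assume a: "a \<in> Hn n"
  then have "a \<in> carrier G" using Hn_sub by auto
  then obtain w where "w \<in> vb_words n" "a = vbc n w" using carrier_G by auto
  then show ?thesis using Hn_iff a by auto
qed

lemma subgroup_VP: "subgroup (VP n) G"
proof (rule subgroupI)
  show "VP n \<subseteq> carrier G" by (rule VP_sub)
  show "VP n \<noteq> {}" using VP_iff[of "[]"] vbc_one by auto
next
  fix a assume "a \<in> VP n"
  then obtain w where w: "w \<in> vb_words n" "a = vbc n w" "iota1 w = id" using VP_elem by blast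
  then show "inv a \<in> VP n" using VP_iff[of "winv w"] by (simp add: vbc_inv iota1_winv')
next
  fix a b assume "a \<in> VP n" "b \<in> VP n"
  then obtain u v where "u \<in> vb_words n" "a = vbc n u" "iota1 u = id" "v \<in> vb_words n" "b = vbc n v" "iota1 v = id"
    using VP_elem by metis
  then show "a \<otimes> b \<in> VP n" using VP_iff[of "u @ v"] by (simp add: vbc_mult)
qed

lemma subgroup_Hn: "subgroup (Hn n) G"
proof (rule subgroupI)
  show "Hn n \<subseteq> carrier G" by (rule Hn_sub)
  show "Hn n \<noteq> {}" using Hn_iff[of "[]"] vbc_one by auto
next
  fix a assume "a \<in> Hn n"
  then obtain w where w: "w \<in> vb_words n" "a = vbc n w" "iota2 w = id" using Hn_elem by blast
  then show "inv a \<in> Hn n" using Hn_iff[of "winv w"] by (simp add: vbc_inv iota2_winv')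
next
  fix a b assume "a \<in> Hn n" "b \<in> Hn n"
  then obtain u v where "u \<in> vb_words n" "a = vbc n u" "iota2 u = id" "v \<in> vb_words n" "b = vbc n v" "iota2 v = id"
    using Hn_elem by metis
  then show "a \<otimes> b \<in> Hn n" using Hn_iff[of "u @ v"] by (simp add: vbc_mult)
qed

lemma Hn_conj: "g \<in> carrier G \<Longrightarrow> h \<in> Hn n \<Longrightarrow> g \<otimes> h \<otimes> inv g \<in> Hn n"
proof -
  assume g: "g \<in> carrier G" and h: "h \<in> Hn n"
  obtain a where a: "a \<in> vb_words n" "g = vbc n a" using g carrier_G by auto
  obtain w where w: "w \<in> vb_words n" "h = vbc n w" "iota2 w = id" using h Hn_elem by blast
  have "iota2 a \<circ> iota2 (winv a) = id" using iota2_winv[of "winv a"] by simp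
  then have "iota2 (a @ w @ winv a) = id" using w by simp
  then show ?thesis using Hn_iff[of "a @ w @ winv a"] a w by (simp add: vbc_mult vbc_inv m_assoc)
qed


lemma pos_distinct: "(int xt - int xr) * (int xt - int xq) * (int xs - int xr) * (int xs - int xq) > 0 \<Longrightarrow>
   xt \<noteq> xr \<and> xt \<noteq> xq \<and> xs \<noteq> xr \<and> xs \<noteq> xq"
  by auto

lemma tp_comm_id: "xt \<noteq> xr \<Longrightarrow> xt \<noteq> xq \<Longrightarrow> xs \<noteq> xr \<Longrightarrow> xs \<noteq> xq \<Longrightarrow> tp xt xs \<circ> tp xr xq \<circ> tp xt xs \<circ> tp xr xq = id"
  by (auto simp: tp_def fun_eq_iff)

lemma tp_id4: "xt \<noteq> xs \<Longrightarrow> xs \<noteq> xr \<Longrightarrow> xt \<noteq> xr \<Longrightarrow> tp xt xs \<circ> tp xs xr \<circ> tp xt xs \<circ> tp xt xr = id"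
  by (auto simp: tp_def fun_eq_iff)

lemma tp_id5: "xt \<noteq> xs \<Longrightarrow> xs \<noteq> xr \<Longrightarrow> xt \<noteq> xr \<Longrightarrow> tp xt xs \<circ> tp xs xr \<circ> tp xt xr \<circ> tp xs xr = id"
  by (auto simp: tp_def fun_eq_iff)

lemma iota_L: "a \<noteq> b \<Longrightarrow> iota1 (lam a b) = id" "a \<noteq> b \<Longrightarrow> iota2 (lam a b) = tp a b"
  "a \<noteq> b \<Longrightarrow> iota1 (winv (lam a b)) = id" "a \<noteq> b \<Longrightarrow> iota2 (winv (lam a b)) = tp a b"
  using iota_lam iota_winv_lam by auto

lemma gens_props: "w \<in> G_gens n \<Longrightarrow> w \<in> vb_words n \<and> iota1 w = id \<and> iota2 w = id"
  unfolding G_gens_def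
proof (elim UnE CollectE exE conjE)
  fix xs xt assume w: "w = lam xs xt @ winv (lam xt xs)" and "1 \<le> xs" "xs < xt" "xt \<le> n"
  then show ?thesis using lam_words[of xs xt] lam_words[of xt xs] iota_L[of xs xt] iota_L[of xt xs] tp_tp[of xs xt]
    by (auto simp: tp_sym[of xt xs])
next
  fix xs xt assume w: "w = lam xt xs @ lam xt xs" and "1 \<le> xs" "xs < xt" "xt \<le> n"
  then show ?thesis using lam_words[of xt xs] iota_L[of xt xs] tp_tp[of xt xs] by auto
next
  fix xs xt xq xr assume w: "w = lam xt xs @ lam xr xq @ winv (lam xt xs) @ winv (lam xr xq)" and a: "1 \<le> xs" "xs < xt" "xt \<le> n" "1 \<le> xq" "xq < xr" "xr \<le> n"
    "0 < (int xt - int xr) * (int xt - int xq) * (int xs - int xr) * (int xs - int xq)"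
  then have d: "xt \<noteq> xr" "xt \<noteq> xq" "xs \<noteq> xr" "xs \<noteq> xq" using pos_distinct by blast+
  show ?thesis using w a lam_words[of xt xs] lam_words[of xr xq] iota_L[of xt xs] iota_L[of xr xq] tp_comm_id[OF d]
    by (auto simp: comp_assoc)
next
  fix xt xs xr assume w: "w = lam xt xs @ lam xs xr @ winv (lam xt xs) @ winv (lam xt xr)" and a: "xt \<le> n" "xs < xt" "xr < xs" "1 \<le> xr"
  show ?thesis using w a lam_words[of xt xs] lam_words[of xs xr] lam_words[of xt xr] iota_L[of xt xs] iota_L[of xs xr] iota_L[of xt xr]
    tp_id4[of xt xs xr] by (auto simp: comp_assoc)
next
  fix xt xs xr assume w: "w = lam xt xs @ lam xs xr @ winv (lam xt xr) @ winv (lam xs xr)" and a: "xt \<le> n" "xs < xt" "xr < xs" "1 \<le> xr"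
  show ?thesis using w a lam_words[of xt xs] lam_words[of xs xr] lam_words[of xt xr] iota_L[of xt xs] iota_L[of xs xr] iota_L[of xt xr]
    tp_id5[of xt xs xr] by (auto simp: comp_assoc)
qed

lemma gens_sub: "vbc n ` G_gens n \<subseteq> VP n \<inter> Hn n"
  using gens_props VP_iff Hn_iff by blast

lemma VPH_subgroup: "subgroup (VP n \<inter> Hn n) G"
  by (rule subgroups_Inter_pair[OF subgroup_VP subgroup_Hn])

lemma Gsub_eq: "Gsub n = generate G (vbc n ` G_gens n)"
  by (simp add: Gsub_def GVB)

lemma Gsub_sub: "Gsub n \<subseteq> VP n \<inter> Hn n"
  unfolding Gsub_eq by (rule generate_subgroup_incl[OF gens_sub VPH_subgroup])

definition Sc where "Sc = {g \<otimes> x \<otimes> inv g | g x. g \<in> VP n \<and> x \<in> Gsub n}"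

definition Ncl where "Ncl = normal_closure_in n (VP n) (Gsub n)"

lemma Ncl_eq: "Ncl = generate G Sc"
  unfolding Ncl_def normal_closure_in_def Sc_def using GVB by simp

lemma Sc_sub: "Sc \<subseteq> VP n \<inter> Hn n"
proof
  fix y assume "y \<in> Sc"
  then obtain g x where y: "y = g \<otimes> x \<otimes> inv g" "g \<in> VP n" "x \<in> Gsub n" unfolding Sc_def by blast
  have x: "x \<in> VP n" "x \<in> Hn n" using y(3) Gsub_sub by auto
  have g: "g \<in> carrier G" using y(2) VP_sub by auto
  have "y \<in> VP n" using y x subgroup_VP by (simp add: subgroup.m_closed subgroup.m_inv_closed)
  moreover have "y \<in> Hn n" using y Hn_conj[OF g x(2)] by simp
  ultimately show "y \<in> VP n \<inter> Hn n" by blast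
qed

lemma Sc_carrier: "Sc \<subseteq> carrier G" using Sc_sub VP_sub by auto

lemma easy: "Ncl \<subseteq> VP n \<inter> Hn n"
  unfolding Ncl_eq by (rule generate_subgroup_incl[OF Sc_sub VPH_subgroup])

lemma Ncl_subgroup: "subgroup Ncl G"
  unfolding Ncl_eq by (rule generate_is_subgroup[OF Sc_carrier])

lemma Ncl_VP: "Ncl \<subseteq> VP n" using easy by auto

lemma Gsub_Ncl: "Gsub n \<subseteq> Ncl"
proof
  fix x assume x: "x \<in> Gsub n"
  have "\<one> \<in> VP n" using subgroup_VP by (rule subgroup.one_closed)
  moreover have "x \<in> carrier G" using x Gsub_sub VP_sub by auto
  ultimately have "x \<in> Sc" using x unfolding Sc_def by (intro CollectI exI[of _ "\<one>"] exI[of _ x]) auto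
  then show "x \<in> Ncl" unfolding Ncl_eq by (rule generate.incl)
qed

lemma inv_cancel_l[simp]: "g \<in> carrier G \<Longrightarrow> z \<in> carrier G \<Longrightarrow> inv g \<otimes> (g \<otimes> z) = z"
  by (simp add: m_assoc[symmetric])

lemma Ncl_normal: "g \<in> VP n \<Longrightarrow> h \<in> Ncl \<Longrightarrow> g \<otimes> h \<otimes> inv g \<in> Ncl"
proof -
  assume g: "g \<in> VP n" and h: "h \<in> Ncl"
  have gc: "g \<in> carrier G" using g VP_sub by auto
  have conjS: "g \<otimes> y \<otimes> inv g \<in> Sc" if "y \<in> Sc" for y
  proof -
    obtain g' x where y: "y = g' \<otimes> x \<otimes> inv g'" "g' \<in> VP n" "x \<in> Gsub n" using `y \<in> Sc` unfolding Sc_def by blast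
    have c: "g' \<in> carrier G" "x \<in> carrier G" using y VP_sub Gsub_sub by auto
    have "g \<otimes> y \<otimes> inv g = (g \<otimes> g') \<otimes> x \<otimes> inv (g \<otimes> g')" using y c gc by (simp add: m_assoc inv_mult_group)
    moreover have "g \<otimes> g' \<in> VP n" using g y subgroup_VP by (simp add: subgroup.m_closed)
    ultimately show ?thesis using y(3) unfolding Sc_def
      by (intro CollectI exI[of _ "g \<otimes> g'"] exI[of _ x] conjI) simp_all
  qed
  show ?thesis using h unfolding Ncl_eq
  proof (induction rule: generate.induct)
    case one
    have "g \<otimes> \<one> \<otimes> inv g = \<one>" using gc by simp
    then show ?case using generate.one[of G Sc] by simp
  next
    case (incl y)
    then have "g \<otimes> y \<otimes> inv g \<in> Sc" by (rule conjS)
    then show ?case by (rule generate.incl)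
  next
    case (inv y)
    have yc: "y \<in> carrier G" using inv Sc_carrier by auto
    have e: "g \<otimes> inv y \<otimes> inv g = inv (g \<otimes> y \<otimes> inv g)" using yc gc by (simp add: inv_mult_group m_assoc)
    have "g \<otimes> y \<otimes> inv g \<in> Sc" using conjS inv by blast
    then have "inv (g \<otimes> y \<otimes> inv g) \<in> generate G Sc" by (rule generate.inv)
    then show ?case using e by simp
  next
    case (eng h1 h2)
    have c: "h1 \<in> carrier G" "h2 \<in> carrier G" using eng generate_in_carrier[OF Sc_carrier] by auto
    have e: "g \<otimes> (h1 \<otimes> h2) \<otimes> inv g = (g \<otimes> h1 \<otimes> inv g) \<otimes> (g \<otimes> h2 \<otimes> inv g)" using c gc by (simp add: m_assoc)
    have "(g \<otimes> h1 \<otimes> inv g) \<otimes> (g \<otimes> h2 \<otimes> inv g) \<in> generate G Sc" using eng.IH by (rule generate.eng)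
    then show ?case using e by simp
  qed
qed

end

context vbG begin

definition VPg where "VPg = G\<lparr>carrier := VP n\<rparr>"
definition Qg where "Qg = VPg Mod Ncl"
definition proj where "proj x = Ncl #>\<^bsub>VPg\<^esub> x"

lemma VPg_group: "group VPg"
  unfolding VPg_def by (rule subgroup.subgroup_is_group[OF subgroup_VP is_group])

lemma Ncl_sub_VPg: "subgroup Ncl VPg"
  unfolding VPg_def by (rule subgroup_incl[OF Ncl_subgroup subgroup_VP Ncl_VP])

lemma Ncl_normal_VPg: "Ncl \<lhd> VPg"
proof -
  have "\<forall>x\<in>carrier VPg. \<forall>h\<in>Ncl. x \<otimes>\<^bsub>VPg\<^esub> h \<otimes>\<^bsub>VPg\<^esub> inv\<^bsub>VPg\<^esub> x \<in> Ncl"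
    using Ncl_normal m_inv_consistent[OF subgroup_VP] by (simp add: VPg_def)
  then show ?thesis using group.normal_inv_iff[OF VPg_group] Ncl_sub_VPg by blast
qed

lemma Q_group: "group Qg"
  unfolding Qg_def by (rule normal.factorgroup_is_group[OF Ncl_normal_VPg])

lemma proj_hom: "proj \<in> hom VPg Qg"
  unfolding Qg_def proj_def by (rule normal.r_coset_hom_Mod[OF Ncl_normal_VPg])

lemma carrier_VPg[simp]: "carrier VPg = VP n" by (simp add: VPg_def)
lemma mult_VPg[simp]: "x \<otimes>\<^bsub>VPg\<^esub> y = x \<otimes> y" by (simp add: VPg_def)
lemma one_VPg[simp]: "\<one>\<^bsub>VPg\<^esub> = \<one>" by (simp add: VPg_def)

lemma proj_c: "x \<in> VP n \<Longrightarrow> proj x \<in> carrier Qg"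
  using proj_hom by (auto simp: hom_def)

lemma proj_mult: "x \<in> VP n \<Longrightarrow> y \<in> VP n \<Longrightarrow> proj (x \<otimes> y) = proj x \<otimes>\<^bsub>Qg\<^esub> proj y"
  using hom_mult[OF proj_hom, of x y] by simp

lemma proj_one_iff: "x \<in> VP n \<Longrightarrow> proj x = \<one>\<^bsub>Qg\<^esub> \<longleftrightarrow> x \<in> Ncl"
proof
  assume x: "x \<in> VP n" and p: "proj x = \<one>\<^bsub>Qg\<^esub>"
  then have "Ncl #>\<^bsub>VPg\<^esub> x = Ncl" by (simp add: proj_def Qg_def)
  then show "x \<in> Ncl" using group.coset_join1[OF VPg_group _ _ Ncl_sub_VPg] x by simp
next
  assume x: "x \<in> VP n" and "x \<in> Ncl"
  then have "Ncl #>\<^bsub>VPg\<^esub> x = Ncl" using subgroup.rcos_const[OF Ncl_sub_VPg VPg_group] by simp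
  then show "proj x = \<one>\<^bsub>Qg\<^esub>" by (simp add: proj_def Qg_def)
qed

lemma proj_one: "proj \<one> = \<one>\<^bsub>Qg\<^esub>"
  using proj_one_iff[of \<one>] subgroup.one_closed[OF subgroup_VP] subgroup.one_closed[OF Ncl_subgroup] by simp

lemma proj_inv: "x \<in> VP n \<Longrightarrow> proj (inv x) = inv\<^bsub>Qg\<^esub> (proj x)"
proof -
  assume x: "x \<in> VP n"
  have ix: "inv x \<in> VP n" using x subgroup.m_inv_closed[OF subgroup_VP] by simp
  have xc: "x \<in> carrier G" using x VP_sub by auto
  have "proj (inv x) \<otimes>\<^bsub>Qg\<^esub> proj x = \<one>\<^bsub>Qg\<^esub>"
    using proj_mult[OF ix x, symmetric] xc proj_one by simp
  then show ?thesis using group.inv_equality[OF Q_group] proj_c[OF ix] proj_c[OF x] by simp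
qed

lemma Lam_VP: "1 \<le> a \<Longrightarrow> a \<le> n \<Longrightarrow> 1 \<le> b \<Longrightarrow> b \<le> n \<Longrightarrow> a \<noteq> b \<Longrightarrow> Lam a b \<in> VP n"
  using VP_iff[OF lam_words, of a b] iota_lam[of a b] vbc_lam[of a b] by simp

lemma Lam_inv_vbc: "1 \<le> a \<Longrightarrow> a \<le> n \<Longrightarrow> 1 \<le> b \<Longrightarrow> b \<le> n \<Longrightarrow> a \<noteq> b \<Longrightarrow> vbc n (winv (lam a b)) = inv (Lam a b)"
  using vbc_inv[OF lam_words, of a b] vbc_lam[of a b] by simp

lemma gen_Ncl: "w \<in> G_gens n \<Longrightarrow> vbc n w \<in> Ncl"
  using Gsub_Ncl generate.incl[of "vbc n w" "vbc n ` G_gens n" G] Gsub_eq by auto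

definition P where "P a b = proj (Lam a b)"


lemma P_c: "1 \<le> a \<Longrightarrow> a \<le> n \<Longrightarrow> 1 \<le> b \<Longrightarrow> b \<le> n \<Longrightarrow> a \<noteq> b \<Longrightarrow> P a b \<in> carrier Qg"
  unfolding P_def by (rule proj_c[OF Lam_VP])

lemma lamlam: "1 \<le> a \<Longrightarrow> a \<le> n \<Longrightarrow> 1 \<le> b \<Longrightarrow> b \<le> n \<Longrightarrow> a \<noteq> b \<Longrightarrow>
  1 \<le> c \<Longrightarrow> c \<le> n \<Longrightarrow> 1 \<le> d \<Longrightarrow> d \<le> n \<Longrightarrow> c \<noteq> d \<Longrightarrow> v \<in> vb_words n \<Longrightarrow>
  vbc n (lam a b @ v) = Lam a b \<otimes> vbc n v \<and> vbc n (winv (lam c d) @ v) = inv (Lam c d) \<otimes> vbc n v"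
  using vbc_mult[OF lam_words[of a b], of v] vbc_mult[OF winv_words[THEN iffD2, OF lam_words[of c d]], of v]
    vbc_lam[of a b] Lam_inv_vbc[of c d] by simp

lemma F2: assumes "1 \<le> b" "b < a" "a \<le> n" shows "P a b \<otimes>\<^bsub>Qg\<^esub> P a b = \<one>\<^bsub>Qg\<^esub>"
proof -
  have "lam a b @ lam a b \<in> G_gens n" unfolding G_gens_def using assms
    by (intro UnI1 UnI2 CollectI exI[of _ b] exI[of _ a]) simp
  then have "vbc n (lam a b @ lam a b) \<in> Ncl" by (rule gen_Ncl)
  moreover have "vbc n (lam a b @ lam a b) = Lam a b \<otimes> Lam a b"
    using lamlam[of a b a b "lam a b"] lam_words[of a b] vbc_lam[of a b] assms by simp
  moreover have L: "Lam a b \<in> VP n" using Lam_VP assms by simp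
  ultimately have "proj (Lam a b \<otimes> Lam a b) = \<one>\<^bsub>Qg\<^esub>"
    using proj_one_iff subgroup.m_closed[OF subgroup_VP L L] by simp
  then show ?thesis using proj_mult[OF L L] by (simp add: P_def)
qed

lemma P_inv_lt: assumes "1 \<le> b" "b < a" "a \<le> n" shows "inv\<^bsub>Qg\<^esub> P a b = P a b"
  using group.inv_equality[OF Q_group F2[OF assms]] P_c assms by simp

lemma F1: assumes "1 \<le> a" "a < b" "b \<le> n" shows "P a b = P b a"
proof -
  have "lam a b @ winv (lam b a) \<in> G_gens n" unfolding G_gens_def using assms
    by (intro UnI1 CollectI exI[of _ a] exI[of _ b]) simp
  then have "vbc n (lam a b @ winv (lam b a)) \<in> Ncl" by (rule gen_Ncl)
  moreover have "vbc n (lam a b @ winv (lam b a)) = Lam a b \<otimes> inv (Lam b a)"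
    using lamlam[of a b b a "winv (lam b a)"] Lam_inv_vbc[of b a] lam_words[of b a] assms by simp
  moreover have L: "Lam a b \<in> VP n" "Lam b a \<in> VP n" using Lam_VP assms by simp_all
  moreover have iL: "inv (Lam b a) \<in> VP n" using subgroup.m_inv_closed[OF subgroup_VP L(2)] .
  ultimately have "proj (Lam a b \<otimes> inv (Lam b a)) = \<one>\<^bsub>Qg\<^esub>"
    using proj_one_iff subgroup.m_closed[OF subgroup_VP L(1) iL] by simp
  then have "P a b \<otimes>\<^bsub>Qg\<^esub> inv\<^bsub>Qg\<^esub> P b a = \<one>\<^bsub>Qg\<^esub>" using proj_mult[OF L(1) iL] proj_inv[OF L(2)] by (simp add: P_def)
  moreover have Pc: "P a b \<in> carrier Qg" "P b a \<in> carrier Qg" using P_c assms by auto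
  moreover have "inv\<^bsub>Qg\<^esub> P b a \<in> carrier Qg" using group.inv_closed[OF Q_group Pc(2)] .
  ultimately have "inv\<^bsub>Qg\<^esub> (inv\<^bsub>Qg\<^esub> P b a) = P a b"
    using group.inv_equality[OF Q_group] by blast
  then show ?thesis using group.inv_inv[OF Q_group Pc(2)] by simp
qed


lemma P_inv: assumes "1 \<le> a" "a \<le> n" "1 \<le> b" "b \<le> n" "a \<noteq> b" shows "inv\<^bsub>Qg\<^esub> P a b = P a b"
proof (cases "b < a")
  case True then show ?thesis using P_inv_lt assms by simp
next
  case False then have "a < b" using assms by simp
  then show ?thesis using P_inv_lt[of a b] F1[of a b] assms by simp
qed

lemma Q4:
  assumes r: "1 \<le> a" "a \<le> n" "1 \<le> b" "b \<le> n" "a \<noteq> b" "1 \<le> c" "c \<le> n" "1 \<le> d" "d \<le> n" "c \<noteq> d"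
     "1 \<le> e" "e \<le> n" "1 \<le> f" "f \<le> n" "e \<noteq> f" "1 \<le> g" "g \<le> n" "1 \<le> h" "h \<le> n" "g \<noteq> h"
    and w: "lam a b @ lam c d @ winv (lam e f) @ winv (lam g h) \<in> G_gens n"
  shows "P a b \<otimes>\<^bsub>Qg\<^esub> (P c d \<otimes>\<^bsub>Qg\<^esub> (P e f \<otimes>\<^bsub>Qg\<^esub> P g h)) = \<one>\<^bsub>Qg\<^esub>"
proof -
  have ws: "lam a b \<in> vb_words n" "lam c d \<in> vb_words n" "winv (lam e f) \<in> vb_words n" "winv (lam g h) \<in> vb_words n"
    using lam_words r by auto
  have L: "Lam a b \<in> VP n" "Lam c d \<in> VP n" "Lam e f \<in> VP n" "Lam g h \<in> VP n" using Lam_VP r by auto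
  have iL: "inv (Lam e f) \<in> VP n" "inv (Lam g h) \<in> VP n" using subgroup.m_inv_closed[OF subgroup_VP] L by auto
  have e1: "vbc n (lam a b @ lam c d @ winv (lam e f) @ winv (lam g h)) =
     Lam a b \<otimes> (Lam c d \<otimes> (inv (Lam e f) \<otimes> inv (Lam g h)))"
    using ws vbc_mult vbc_lam r Lam_inv_vbc by simp
  have m: "Lam a b \<otimes> (Lam c d \<otimes> (inv (Lam e f) \<otimes> inv (Lam g h))) \<in> VP n"
    using L iL subgroup.m_closed[OF subgroup_VP] by simp
  have "Lam a b \<otimes> (Lam c d \<otimes> (inv (Lam e f) \<otimes> inv (Lam g h))) \<in> Ncl" using gen_Ncl[OF w] e1 by simp
  then have "proj (Lam a b \<otimes> (Lam c d \<otimes> (inv (Lam e f) \<otimes> inv (Lam g h)))) = \<one>\<^bsub>Qg\<^esub>" using proj_one_iff m by simp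
  moreover have "proj (Lam a b \<otimes> (Lam c d \<otimes> (inv (Lam e f) \<otimes> inv (Lam g h)))) =
      P a b \<otimes>\<^bsub>Qg\<^esub> (P c d \<otimes>\<^bsub>Qg\<^esub> (P e f \<otimes>\<^bsub>Qg\<^esub> P g h))"
    using L iL subgroup.m_closed[OF subgroup_VP] proj_mult proj_inv P_inv r by (simp add: P_def)
  ultimately show ?thesis by simp
qed

lemma F3:
  assumes "1 \<le> b" "b < a" "a \<le> n" "1 \<le> d" "d < c" "c \<le> n"
    "(int a - int c) * (int a - int d) * (int b - int c) * (int b - int d) > 0"
  shows "P a b \<otimes>\<^bsub>Qg\<^esub> P c d = P c d \<otimes>\<^bsub>Qg\<^esub> P a b"
proof -
  interpret Q: group Qg by (rule Q_group)
  have "lam a b @ lam c d @ winv (lam a b) @ winv (lam c d) \<in> G_gens n" unfolding G_gens_def using assms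
    by (intro UnI1 UnI2 CollectI exI[of _ b] exI[of _ a] exI[of _ d] exI[of _ c]) simp
  then have e: "P a b \<otimes>\<^bsub>Qg\<^esub> (P c d \<otimes>\<^bsub>Qg\<^esub> (P a b \<otimes>\<^bsub>Qg\<^esub> P c d)) = \<one>\<^bsub>Qg\<^esub>" using Q4 assms by simp
  have c: "P a b \<in> carrier Qg" "P c d \<in> carrier Qg" using P_c assms by auto
  have "(P a b \<otimes>\<^bsub>Qg\<^esub> P c d) \<otimes>\<^bsub>Qg\<^esub> (P a b \<otimes>\<^bsub>Qg\<^esub> P c d) = \<one>\<^bsub>Qg\<^esub>" using e c by (simp add: Q.m_assoc)
  then have "inv\<^bsub>Qg\<^esub> (P a b \<otimes>\<^bsub>Qg\<^esub> P c d) = P a b \<otimes>\<^bsub>Qg\<^esub> P c d" using c by (intro Q.inv_equality) auto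
  then show ?thesis using c P_inv assms by (simp add: Q.inv_mult_group)
qed

lemma F4:
  assumes "1 \<le> c" "c < b" "b < a" "a \<le> n"
  shows "P a c = P a b \<otimes>\<^bsub>Qg\<^esub> P b c \<otimes>\<^bsub>Qg\<^esub> P a b"
proof -
  interpret Q: group Qg by (rule Q_group)
  have "lam a b @ lam b c @ winv (lam a b) @ winv (lam a c) \<in> G_gens n" unfolding G_gens_def using assms
    by (intro UnI1 UnI2 CollectI exI[of _ a] exI[of _ b] exI[of _ c]) simp
  then have e: "P a b \<otimes>\<^bsub>Qg\<^esub> (P b c \<otimes>\<^bsub>Qg\<^esub> (P a b \<otimes>\<^bsub>Qg\<^esub> P a c)) = \<one>\<^bsub>Qg\<^esub>" using Q4 assms by simp
  have c: "P a b \<in> carrier Qg" "P b c \<in> carrier Qg" "P a c \<in> carrier Qg" using P_c assms by auto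
  have "(P a b \<otimes>\<^bsub>Qg\<^esub> P b c \<otimes>\<^bsub>Qg\<^esub> P a b) \<otimes>\<^bsub>Qg\<^esub> P a c = \<one>\<^bsub>Qg\<^esub>" using e c by (simp add: Q.m_assoc)
  then have "inv\<^bsub>Qg\<^esub> (P a c) = P a b \<otimes>\<^bsub>Qg\<^esub> P b c \<otimes>\<^bsub>Qg\<^esub> P a b" using c by (intro Q.inv_equality) auto
  then show ?thesis using P_inv assms by simp
qed

lemma F5:
  assumes "1 \<le> c" "c < b" "b < a" "a \<le> n"
  shows "P a c = P b c \<otimes>\<^bsub>Qg\<^esub> P a b \<otimes>\<^bsub>Qg\<^esub> P b c"
proof -
  interpret Q: group Qg by (rule Q_group)
  have "lam a b @ lam b c @ winv (lam a c) @ winv (lam b c) \<in> G_gens n" unfolding G_gens_def using assms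
    by (intro UnI2 CollectI exI[of _ a] exI[of _ b] exI[of _ c]) simp
  then have e: "P a b \<otimes>\<^bsub>Qg\<^esub> (P b c \<otimes>\<^bsub>Qg\<^esub> (P a c \<otimes>\<^bsub>Qg\<^esub> P b c)) = \<one>\<^bsub>Qg\<^esub>" using Q4 assms by simp
  have c: "P a b \<in> carrier Qg" "P b c \<in> carrier Qg" "P a c \<in> carrier Qg" using P_c assms by auto
  have "(P a b \<otimes>\<^bsub>Qg\<^esub> P b c) \<otimes>\<^bsub>Qg\<^esub> (P a c \<otimes>\<^bsub>Qg\<^esub> P b c) = \<one>\<^bsub>Qg\<^esub>" using e c by (simp add: Q.m_assoc)
  then have "inv\<^bsub>Qg\<^esub> (P a c \<otimes>\<^bsub>Qg\<^esub> P b c) = P a b \<otimes>\<^bsub>Qg\<^esub> P b c" using c by (intro Q.inv_equality) auto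
  then have "P b c \<otimes>\<^bsub>Qg\<^esub> P a c = P a b \<otimes>\<^bsub>Qg\<^esub> P b c"
    using c P_inv assms Q.inv_inv by (simp add: Q.inv_mult_group)
  moreover have "P b c \<otimes>\<^bsub>Qg\<^esub> P b c = \<one>\<^bsub>Qg\<^esub>" using F2 assms by simp
  then have "P a c = P b c \<otimes>\<^bsub>Qg\<^esub> (P b c \<otimes>\<^bsub>Qg\<^esub> P a c)" using c by (simp add: Q.m_assoc[symmetric])
  ultimately show ?thesis using c by (simp add: Q.m_assoc)
qed

end

fun Wd :: "nat \<Rightarrow> nat \<Rightarrow> nat list" where
  "Wd x 0 = [x]"
| "Wd x (Suc d) = Wd (Suc x) d @ [x] @ Wd (Suc x) d"

lemma set_Wd: "set (Wd x d) \<subseteq> {x..x + d}"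
proof (induction d arbitrary: x)
  case 0 then show ?case by simp
next
  case (Suc d)
  have "set (Wd (Suc x) d) \<subseteq> {Suc x..Suc x + d}" by (rule Suc.IH)
  then show ?case by auto
qed

lemma perm_Wd: "perm (Wd x d) = tp x (x + d + 1)"
proof (induction d arbitrary: x)
  case 0 then show ?case by (auto simp: tp_def tr_def fun_eq_iff)
next
  case (Suc d)
  have "perm (Wd x (Suc d)) = tp (Suc x) (Suc x + d + 1) \<circ> tr x \<circ> tp (Suc x) (Suc x + d + 1)"
    using Suc by (simp add: comp_assoc)
  then show ?case by (auto simp: tp_def tr_def fun_eq_iff)
qed

lemma pos_far: "i + 2 \<le> j \<Longrightarrow> (int (i+1) - int (j+1)) * (int (i+1) - int j) * (int i - int (j+1)) * (int i - int j) > 0"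
proof -
  assume a: "i + 2 \<le> j"
  define A where "A = int j - int i"
  have A: "A \<ge> 2" using a by (simp add: A_def)
  have "(int (i+1) - int (j+1)) * (int (i+1) - int j) * (int i - int (j+1)) * (int i - int j) = A * (A - 1) * (A + 1) * A"
    by (simp add: A_def algebra_simps)
  moreover have "A * (A - 1) * (A + 1) * A > 0" using A by (intro mult_pos_pos) auto
  ultimately show ?thesis by simp
qed

context vbG begin

lemma Q_r_one: "x \<in> carrier Qg \<Longrightarrow> x \<otimes>\<^bsub>Qg\<^esub> \<one>\<^bsub>Qg\<^esub> = x"
  using monoid.r_one[OF group.is_monoid[OF Q_group]] by simp

definition sq where "sq i = P (i + 1) i"

lemma cox_sq: "cox Qg sq (n - 1)"
  unfolding cox_def
proof (intro conjI allI impI)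
  fix i assume i: "1 \<le> i \<and> i \<le> n - 1"
  then show "sq i \<in> carrier Qg" unfolding sq_def by (intro P_c) auto
  show "sq i \<otimes>\<^bsub>Qg\<^esub> sq i = \<one>\<^bsub>Qg\<^esub>" unfolding sq_def using i by (intro F2) auto
next
  fix i j assume ij: "1 \<le> i \<and> j \<le> n - 1 \<and> i + 2 \<le> j"
  then show "sq i \<otimes>\<^bsub>Qg\<^esub> sq j = sq j \<otimes>\<^bsub>Qg\<^esub> sq i" unfolding sq_def
    using pos_far[of i j] by (intro F3) auto
next
  fix i assume i: "1 \<le> i \<and> i + 1 \<le> n - 1"
  have "P (i + 2) i = P (i + 2) (i + 1) \<otimes>\<^bsub>Qg\<^esub> P (i + 1) i \<otimes>\<^bsub>Qg\<^esub> P (i + 2) (i + 1)" using i by (intro F4) auto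
  moreover have "P (i + 2) i = P (i + 1) i \<otimes>\<^bsub>Qg\<^esub> P (i + 2) (i + 1) \<otimes>\<^bsub>Qg\<^esub> P (i + 1) i" using i by (intro F5) auto
  ultimately show "sq i \<otimes>\<^bsub>Qg\<^esub> sq (i + 1) \<otimes>\<^bsub>Qg\<^esub> sq i = sq (i + 1) \<otimes>\<^bsub>Qg\<^esub> sq i \<otimes>\<^bsub>Qg\<^esub> sq (i + 1)"
    unfolding sq_def by (simp add: add.commute)
qed

lemma PW: "1 \<le> x \<Longrightarrow> x + d + 1 \<le> n \<Longrightarrow> P (x + d + 1) x = gprod Qg sq (Wd x d)"
proof (induction d arbitrary: x)
  case 0 then show ?case using P_c[of "x+1" x] Q_r_one by (simp add: sq_def)
next
  case (Suc d)
  have IH: "P (Suc x + d + 1) (Suc x) = gprod Qg sq (Wd (Suc x) d)" using Suc.prems by (intro Suc.IH) auto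
  have "P (x + Suc d + 1) x = P (x + d + 2) (x + 1) \<otimes>\<^bsub>Qg\<^esub> P (x + 1) x \<otimes>\<^bsub>Qg\<^esub> P (x + d + 2) (x + 1)"
    using Suc.prems F4[of x "x + 1" "x + d + 2"] by simp
  also have "\<dots> = gprod Qg sq (Wd (Suc x) d) \<otimes>\<^bsub>Qg\<^esub> gprod Qg sq [x] \<otimes>\<^bsub>Qg\<^esub> gprod Qg sq (Wd (Suc x) d)"
    using IH P_c[of "x+1" x] Q_r_one Suc.prems by (simp add: sq_def add.commute)
  also have "\<dots> = gprod Qg sq (Wd x (Suc d))"
  proof -
    have s1: "set (Wd (Suc x) d) \<subseteq> {1..n - 1}"
      by (rule subset_trans[OF set_Wd[of "Suc x" d]]) (use Suc.prems in auto)
    have s2: "set [x] \<subseteq> {1..n - 1}" using Suc.prems by auto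
    show ?thesis
      using group.gprod_append[OF Q_group cox_sq s1, of "[x] @ Wd (Suc x) d"]
        group.gprod_append[OF Q_group cox_sq s2 s1]
        group.gprod_carrier[OF Q_group cox_sq s1] group.gprod_carrier[OF Q_group cox_sq s2] s1 s2
      by (simp add: monoid.m_assoc[OF group.is_monoid[OF Q_group]])
  qed
  finally show ?case .
qed


definition Wy :: "nat \<times> nat \<times> bool \<Rightarrow> nat list" where
  "Wy y = (if fst (snd y) < fst y then Wd (fst (snd y)) (fst y - fst (snd y) - 1)
           else Wd (fst y) (fst (snd y) - fst y - 1))"

lemma Wy_set: "okp y \<Longrightarrow> set (Wy y) \<subseteq> {1..n - 1}"
proof -
  assume y: "okp y"
  obtain a b e where abe: "y = (a, b, e)" by (cases y) auto
  have r: "1 \<le> a" "a \<le> n" "1 \<le> b" "b \<le> n" "a \<noteq> b" using y abe by (auto simp: okp_def)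
  show ?thesis
  proof (cases "b < a")
    case True
    show ?thesis unfolding Wy_def abe using True
      by simp (rule subset_trans[OF set_Wd], use r in auto)
  next
    case False
    show ?thesis unfolding Wy_def abe using False
      by simp (rule subset_trans[OF set_Wd], use r in auto)
  qed
qed

lemma Wy_perm: "okp y \<Longrightarrow> perm (Wy y) = tp (fst y) (fst (snd y))"
proof -
  assume y: "okp y"
  obtain a b e where abe: "y = (a, b, e)" by (cases y) auto
  have r: "1 \<le> a" "a \<le> n" "1 \<le> b" "b \<le> n" "a \<noteq> b" using y abe by (auto simp: okp_def)
  show ?thesis
  proof (cases "b < a")
    case True
    then have "b + (a - b - 1) + 1 = a" by simp
    then show ?thesis unfolding Wy_def abe using True perm_Wd[of b "a - b - 1"] by (simp add: tp_sym)
  next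
    case False
    then have "a + (b - a - 1) + 1 = b" using r by simp
    then show ?thesis unfolding Wy_def abe using False perm_Wd[of a "b - a - 1"] by simp
  qed
qed

lemma P_W: "okp y \<Longrightarrow> P (fst y) (fst (snd y)) = gprod Qg sq (Wy y)"
proof -
  assume y: "okp y"
  obtain a b e where abe: "y = (a, b, e)" by (cases y) auto
  have r: "1 \<le> a" "a \<le> n" "1 \<le> b" "b \<le> n" "a \<noteq> b" using y abe by (auto simp: okp_def)
  show ?thesis
  proof (cases "b < a")
    case True
    then have e: "b + (a - b - 1) + 1 = a" by simp
    show ?thesis unfolding Wy_def abe using True PW[of b "a - b - 1"] e r by simp
  next
    case False
    then have e: "a + (b - a - 1) + 1 = b" "a < b" using r by auto
    show ?thesis unfolding Wy_def abe using False PW[of a "b - a - 1"] e r F1[of a b] by simp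
  qed
qed

lemma elt_VP: "okp y \<Longrightarrow> elt y \<in> VP n"
  using Lam_VP subgroup.m_inv_closed[OF subgroup_VP]
  by (auto simp: okp_def elt_def split: prod.splits)

lemma proj_elt: "okp y \<Longrightarrow> proj (elt y) = gprod Qg sq (Wy y)"
proof -
  assume y: "okp y"
  obtain a b e where abe: "y = (a, b, e)" by (cases y) auto
  have r: "1 \<le> a" "a \<le> n" "1 \<le> b" "b \<le> n" "a \<noteq> b" using y abe by (auto simp: okp_def)
  have "proj (elt y) = P a b"
  proof (cases e)
    case True then show ?thesis by (simp add: abe elt_def P_def)
  next
    case False then show ?thesis using proj_inv[OF Lam_VP[OF r]] P_inv[OF r] by (simp add: abe elt_def P_def)
  qed
  then show ?thesis using P_W[OF y] abe by simp
qed

lemma lprod_VP: "valid u \<Longrightarrow> lprod u \<in> VP n"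
  by (induction u) (auto simp: subgroup.one_closed[OF subgroup_VP] subgroup.m_closed[OF subgroup_VP] elt_VP)

lemma Wu_set: "valid u \<Longrightarrow> set (concat (map Wy u)) \<subseteq> {1..n - 1}"
proof (induction u)
  case Nil then show ?case by simp
next
  case (Cons y u)
  then have "set (Wy y) \<subseteq> {1..n - 1}" "set (concat (map Wy u)) \<subseteq> {1..n - 1}" using Wy_set by auto
  then show ?case by (simp only: concat.simps list.map set_append Un_subset_iff)
qed

lemma proj_lprod: "valid u \<Longrightarrow> proj (lprod u) = gprod Qg sq (concat (map Wy u))"
proof (induction u)
  case Nil then show ?case using proj_one by simp
next
  case (Cons y u)
  then have y: "okp y" and u: "valid u" by auto
  have "proj (lprod (y # u)) = proj (elt y) \<otimes>\<^bsub>Qg\<^esub> proj (lprod u)"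
    using proj_mult[OF elt_VP[OF y] lprod_VP[OF u]] by simp
  also have "\<dots> = gprod Qg sq (Wy y) \<otimes>\<^bsub>Qg\<^esub> gprod Qg sq (concat (map Wy u))"
    using proj_elt[OF y] Cons.IH[OF u] by simp
  also have "\<dots> = gprod Qg sq (concat (map Wy (y # u)))"
    using group.gprod_append[OF Q_group cox_sq Wy_set[OF y] Wu_set[OF u]] by simp
  finally show ?case .
qed

definition tprod :: "(nat \<times> nat \<times> bool) list \<Rightarrow> nat \<Rightarrow> nat" where
  "tprod u = foldr (\<lambda>y f. tp (fst y) (fst (snd y)) \<circ> f) u id"

lemma perm_Wu: "valid u \<Longrightarrow> perm (concat (map Wy u)) = tprod u"
  by (induction u) (auto simp: tprod_def Wy_perm)

definition lw :: "nat \<times> nat \<times> bool \<Rightarrow> vword" where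
  "lw y = (if snd (snd y) then lam (fst y) (fst (snd y)) else winv (lam (fst y) (fst (snd y))))"

definition Lw where "Lw u = concat (map lw u)"

lemma lw_props: "okp y \<Longrightarrow> lw y \<in> vb_words n \<and> vbc n (lw y) = elt y \<and> iota1 (lw y) = id \<and>
    iota2 (lw y) = tp (fst y) (fst (snd y))"
proof -
  assume y: "okp y"
  obtain a b e where abe: "y = (a, b, e)" by (cases y) auto
  have r: "1 \<le> a" "a \<le> n" "1 \<le> b" "b \<le> n" "a \<noteq> b" using y abe by (auto simp: okp_def)
  show ?thesis
  proof (cases e)
    case True then show ?thesis using lam_words[OF r] vbc_lam[OF r] iota_lam[OF r(5)] by (simp add: abe lw_def elt_def)
  next
    case False then show ?thesis using lam_words[OF r] Lam_inv_vbc[OF r] iota_winv_lam[OF r(5)] by (simp add: abe lw_def elt_def)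
  qed
qed

lemma Lw_props: "valid u \<Longrightarrow> Lw u \<in> vb_words n \<and> vbc n (Lw u) = lprod u \<and> iota1 (Lw u) = id \<and> iota2 (Lw u) = tprod u"
proof (induction u)
  case Nil then show ?case by (simp add: Lw_def vbc_one tprod_def)
next
  case (Cons y u)
  then have y: "okp y" and u: "valid u" by auto
  have e: "Lw (y # u) = lw y @ Lw u" by (simp add: Lw_def)
  show ?case using lw_props[OF y] Cons.IH[OF u] vbc_mult[of "lw y" "Lw u"] unfolding e
    by (simp add: tprod_def Lw_def)
qed

lemma cox_r: "cox G r (n - 1)"
  unfolding cox_def
proof (intro conjI allI impI)
  fix i assume "1 \<le> i \<and> i \<le> n - 1"
  then show "r i \<in> carrier G" "r i \<otimes> r i = \<one>" by auto
next
  fix i j assume "1 \<le> i \<and> j \<le> n - 1 \<and> i + 2 \<le> j"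
  then show "r i \<otimes> r j = r j \<otimes> r i" by (intro far_rr) auto
next
  fix i assume "1 \<le> i \<and> i + 1 \<le> n - 1"
  then show "r i \<otimes> r (i + 1) \<otimes> r i = r (i + 1) \<otimes> r i \<otimes> r (i + 1)" by (intro braid_r) auto
qed

lemma hard: "c \<in> VP n \<Longrightarrow> c \<in> Hn n \<Longrightarrow> c \<in> Ncl"
proof -
  assume cV: "c \<in> VP n" and cH: "c \<in> Hn n"
  obtain w where w: "w \<in> vb_words n" "c = vbc n w" "iota1 w = id" using VP_elem[OF cV] by blast
  have i2: "iota2 w = id" using Hn_iff[OF w(1)] cH w(2) by simp
  obtain u p where up: "valid u" "set p \<subseteq> {1..<n}" "vbc n w = lprod u \<otimes> gprod G r p"
    using decomp[OF w(1)] by blast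
  have L: "Lw u \<in> vb_words n" "vbc n (Lw u) = lprod u" "iota1 (Lw u) = id" "iota2 (Lw u) = tprod u"
    using Lw_props[OF up(1)] by auto
  have pw: "map rh p \<in> vb_words n" using map_rh_words[OF up(2)] .
  have "vbc n w = vbc n (Lw u @ map rh p)" using up(3) L vbc_mult[OF L(1) pw] gprod_r[OF up(2)] by simp
  then have "(w, Lw u @ map rh p) \<in> vb_rel n" using vbc_eq_iff[OF w(1)] L(1) pw by simp
  then have "iota1 w = iota1 (Lw u @ map rh p)" "iota2 w = iota2 (Lw u @ map rh p)" using iota_rel by auto
  then have pid: "perm p = id" and tid: "tprod u \<circ> perm p = id" using w(3) i2 L iota_map_rh by auto
  have p1: "set p \<subseteq> {1..n - 1}" by (rule subset_trans[OF up(2)]) auto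
  have "gprod G r p = \<one>" using coxeter[OF is_group cox_r p1 pid] .
  then have cu: "c = lprod u" using up w lprod_c[OF up(1)] by simp
  have "tprod u = id" using tid pid by simp
  then have "perm (concat (map Wy u)) = id" using perm_Wu[OF up(1)] by simp
  then have "gprod Qg sq (concat (map Wy u)) = \<one>\<^bsub>Qg\<^esub>" using coxeter[OF Q_group cox_sq Wu_set[OF up(1)]] by simp
  then have "proj (lprod u) = \<one>\<^bsub>Qg\<^esub>" using proj_lprod[OF up(1)] by simp
  then show ?thesis using proj_one_iff[OF lprod_VP[OF up(1)]] cu by simp
qed

lemma main: "normal_closure_in n (VP n) (Gsub n) = VP n \<inter> Hn n"
  using easy hard unfolding Ncl_def by blast

end

theorem theorem7:
  shows "normal_closure_in n (VP n) (Gsub n) = VP n \<inter> Hn n"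
proof -
  interpret vbG "VB n" n by (simp add: vbG_def vbG_axioms_def group_VB)
  show ?thesis by (rule main)
qed

end
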